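(* Let $P$ be a finite ranked poset with unique minimal element and with the non-nesting property, such that $|S(p)|>1$ whenever $p$ has rank greater than $1$. If $Q$ is a finite ranked poset with unique minimal element such that $Q\sim_BP$, then $P_{\ge2}\cong Q_{\ge2}$ as (ranked) posets.
   Context: A ranked poset has a rank function with $|x|=|y|+1$ whenever $x$ covers $y$ and $|x|=0$ iff $x$ is minimal. Its Hasse diagram is the layered graph with layers $P_i=\{p:|p|=i\}$ and an edge $(p,q)$ for each covering relation $p\gtrdot q$; $S(p)$ is the set of elements covered by $p$, and $P_{\ge j}=\bigcup_{i\ge j}P_i$ with the induced order. For a layered graph with vertex set $V=\bigsqcup V_i$, $V_+=\bigsqcup_{i\ge1}V_i$, $B(\Gamma)=T(V_+)/R_B$ over a field $\mathbb F$, where $R_B$ is the two-sided ideal generated by $\{vw: v,w\in V_+,(v,w)\notin E\}\cup\{v\sum_{w\in S(v)}w: v\in V_{\ge2}\}$; it is doubly graded with $v_1\cdots v_m$ in bidegree $(m,\sum|v_i|)$. $B(P)$ means $B$ of the Hasse diagram, and $Q\sim_BP$ means there is a doubly graded algebra isomorphism $B(P)\to B(Q)$. $P$ has the non-nesting property if for any two distinct elements $p,q$ each covering more than one element, $S(p)\not\subseteq S(q)$. *)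

theory Defs
  imports Main
begin

definition is_poset :: "'a set \<Rightarrow> ('a \<Rightarrow> 'a \<Rightarrow> bool) \<Rightarrow> bool" where
  "is_poset P le \<longleftrightarrow>
     (\<forall>x\<in>P. le x x) \<and>
     (\<forall>x\<in>P. \<forall>y\<in>P. le x y \<and> le y x \<longrightarrow> x = y) \<and>
     (\<forall>x\<in>P. \<forall>y\<in>P. \<forall>z\<in>P. le x y \<and> le y z \<longrightarrow> le x z)"

definition covers :: "'a set \<Rightarrow> ('a \<Rightarrow> 'a \<Rightarrow> bool) \<Rightarrow> 'a \<Rightarrow> 'a \<Rightarrow> bool" where
  "covers P le p q \<longleftrightarrow> p \<in> P \<and> q \<in> P \<and> le q p \<and> q \<noteq> p \<and>
     \<not> (\<exists>r\<in>P. le q r \<and> le r p \<and> r \<noteq> q \<and> r \<noteq> p)"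

definition minimal_elem :: "'a set \<Rightarrow> ('a \<Rightarrow> 'a \<Rightarrow> bool) \<Rightarrow> 'a \<Rightarrow> bool" where
  "minimal_elem P le x \<longleftrightarrow> x \<in> P \<and> (\<forall>y\<in>P. le y x \<longrightarrow> y = x)"

definition rank_function :: "'a set \<Rightarrow> ('a \<Rightarrow> 'a \<Rightarrow> bool) \<Rightarrow> ('a \<Rightarrow> nat) \<Rightarrow> bool" where
  "rank_function P le rk \<longleftrightarrow>
     (\<forall>p q. covers P le p q \<longrightarrow> rk p = rk q + 1) \<and>
     (\<forall>x\<in>P. rk x = 0 \<longleftrightarrow> minimal_elem P le x)"

definition fin_ranked_poset_umin :: "'a set \<Rightarrow> ('a \<Rightarrow> 'a \<Rightarrow> bool) \<Rightarrow> ('a \<Rightarrow> nat) \<Rightarrow> bool" where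
  "fin_ranked_poset_umin P le rk \<longleftrightarrow> finite P \<and> is_poset P le \<and> rank_function P le rk \<and>
     (\<exists>!x. minimal_elem P le x)"

definition S_cov :: "'a set \<Rightarrow> ('a \<Rightarrow> 'a \<Rightarrow> bool) \<Rightarrow> 'a \<Rightarrow> 'a set" where
  "S_cov P le p = {q. covers P le p q}"

definition non_nesting :: "'a set \<Rightarrow> ('a \<Rightarrow> 'a \<Rightarrow> bool) \<Rightarrow> bool" where
  "non_nesting P le \<longleftrightarrow>
     (\<forall>p\<in>P. \<forall>q\<in>P. p \<noteq> q \<and> card (S_cov P le p) > 1 \<and> card (S_cov P le q) > 1
        \<longrightarrow> \<not> S_cov P le p \<subseteq> S_cov P le q)"

text \<open>Elements of the tensor algebra T(V_+) over the field 'k are finitely supported functions from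
  words (lists) over V_+ to 'k.\<close>

definition Vplus :: "'v set \<Rightarrow> ('v \<Rightarrow> nat) \<Rightarrow> 'v set" where
  "Vplus V rk = {v\<in>V. rk v \<ge> 1}"

definition tens :: "'v set \<Rightarrow> ('v list \<Rightarrow> 'k::field) set" where
  "tens W = {x. finite {w. x w \<noteq> 0} \<and> (\<forall>w. x w \<noteq> 0 \<longrightarrow> set w \<subseteq> W)}"

definition tmult :: "('v list \<Rightarrow> 'k::field) \<Rightarrow> ('v list \<Rightarrow> 'k) \<Rightarrow> ('v list \<Rightarrow> 'k)" where
  "tmult x y = (\<lambda>w. \<Sum>i\<in>{0..length w}. x (take i w) * y (drop i w))"

definition tmono :: "'v list \<Rightarrow> ('v list \<Rightarrow> 'k::field)" where
  "tmono u = (\<lambda>w. if w = u then 1 else 0)"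

definition tadd :: "('v list \<Rightarrow> 'k::field) \<Rightarrow> ('v list \<Rightarrow> 'k) \<Rightarrow> ('v list \<Rightarrow> 'k)" where
  "tadd x y = (\<lambda>w. x w + y w)"

definition tsub :: "('v list \<Rightarrow> 'k::field) \<Rightarrow> ('v list \<Rightarrow> 'k) \<Rightarrow> ('v list \<Rightarrow> 'k)" where
  "tsub x y = (\<lambda>w. x w - y w)"

definition tscale :: "'k::field \<Rightarrow> ('v list \<Rightarrow> 'k) \<Rightarrow> ('v list \<Rightarrow> 'k)" where
  "tscale c x = (\<lambda>w. c * x w)"

inductive_set tideal :: "'v set \<Rightarrow> ('v list \<Rightarrow> 'k::field) set \<Rightarrow> ('v list \<Rightarrow> 'k) set"
  for W G where
  zero: "(\<lambda>_. 0) \<in> tideal W G"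
| gen: "g \<in> G \<Longrightarrow> a \<in> tens W \<Longrightarrow> b \<in> tens W \<Longrightarrow> tmult (tmult a g) b \<in> tideal W G"
| add: "x \<in> tideal W G \<Longrightarrow> y \<in> tideal W G \<Longrightarrow> tadd x y \<in> tideal W G"

definition RB_gens :: "'v set \<Rightarrow> ('v \<Rightarrow> nat) \<Rightarrow> ('v \<times> 'v) set \<Rightarrow> ('v list \<Rightarrow> 'k::field) set" where
  "RB_gens V rk E =
     {tmono [v, w] | v w. v \<in> Vplus V rk \<and> w \<in> Vplus V rk \<and> (v, w) \<notin> E} \<union>
     {(\<lambda>u. \<Sum>w\<in>{w. (v, w) \<in> E}. tmono [v, w] u) | v. v \<in> V \<and> rk v \<ge> 2}"

definition RB :: "'v set \<Rightarrow> ('v \<Rightarrow> nat) \<Rightarrow> ('v \<times> 'v) set \<Rightarrow> ('v list \<Rightarrow> 'k::field) set" where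
  "RB V rk E = tideal (Vplus V rk) (RB_gens V rk E)"

definition homog :: "('v \<Rightarrow> nat) \<Rightarrow> nat \<Rightarrow> nat \<Rightarrow> ('v list \<Rightarrow> 'k::field) \<Rightarrow> bool" where
  "homog rk m n x \<longleftrightarrow> (\<forall>w. x w \<noteq> 0 \<longrightarrow> length w = m \<and> sum_list (map rk w) = n)"

text \<open>phi, acting on representatives in T(V_+), induces a doubly graded (unital) algebra
  isomorphism B(Gamma1) = T(V1_+)/R_B(Gamma1) \<rightarrow> B(Gamma2) = T(V2_+)/R_B(Gamma2).\<close>
definition graded_B_iso ::
  "'v set \<Rightarrow> ('v \<Rightarrow> nat) \<Rightarrow> ('v \<times> 'v) set \<Rightarrow>
   'u set \<Rightarrow> ('u \<Rightarrow> nat) \<Rightarrow> ('u \<times> 'u) set \<Rightarrow>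
   (('v list \<Rightarrow> 'k::field) \<Rightarrow> ('u list \<Rightarrow> 'k)) \<Rightarrow> bool" where
  "graded_B_iso V1 rk1 E1 V2 rk2 E2 phi \<longleftrightarrow>
    (let T1 = tens (Vplus V1 rk1); T2 = tens (Vplus V2 rk2);
         I1 = RB V1 rk1 E1; I2 = RB V2 rk2 E2 in
     (\<forall>x\<in>T1. phi x \<in> T2) \<and>
     (\<forall>x\<in>T1. \<forall>y\<in>T1. tsub x y \<in> I1 \<longrightarrow> tsub (phi x) (phi y) \<in> I2) \<and>
     (\<forall>x\<in>T1. \<forall>y\<in>T1. tsub (phi x) (phi y) \<in> I2 \<longrightarrow> tsub x y \<in> I1) \<and>
     (\<forall>z\<in>T2. \<exists>x\<in>T1. tsub (phi x) z \<in> I2) \<and>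
     (\<forall>c. \<forall>x\<in>T1. \<forall>y\<in>T1.
        tsub (phi (tadd (tscale c x) y)) (tadd (tscale c (phi x)) (phi y)) \<in> I2) \<and>
     (\<forall>x\<in>T1. \<forall>y\<in>T1. tsub (phi (tmult x y)) (tmult (phi x) (phi y)) \<in> I2) \<and>
     tsub (phi (tmono [])) (tmono []) \<in> I2 \<and>
     (\<forall>x\<in>T1. \<forall>m n. homog rk1 m n x \<longrightarrow>
        (\<exists>y\<in>T2. homog rk2 m n y \<and> tsub (phi x) y \<in> I2)))"

definition hasse_edges :: "'a set \<Rightarrow> ('a \<Rightarrow> 'a \<Rightarrow> bool) \<Rightarrow> ('a \<times> 'a) set" where
  "hasse_edges P le = {(p, q). covers P le p q}"

definition B_equiv ::
  "'k::field itself \<Rightarrow> 'b set \<Rightarrow> ('b \<Rightarrow> 'b \<Rightarrow> bool) \<Rightarrow> ('b \<Rightarrow> nat) \<Rightarrow>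
   'a set \<Rightarrow> ('a \<Rightarrow> 'a \<Rightarrow> bool) \<Rightarrow> ('a \<Rightarrow> nat) \<Rightarrow> bool" where
  "B_equiv _ Q leQ rkQ P leP rkP \<longleftrightarrow>
     (\<exists>phi :: ('a list \<Rightarrow> 'k) \<Rightarrow> ('b list \<Rightarrow> 'k).
        graded_B_iso P rkP (hasse_edges P leP) Q rkQ (hasse_edges Q leQ) phi)"

end

theory Submission
  imports Defs
begin



lemma tmult_Nil: "tmult x y [] = x [] * y []"
  by (simp add: tmult_def)

lemma tmult_Cons: "tmult x y (a#w) = x [] * y (a#w) + tmult (\<lambda>v. x (a#v)) y w"
  unfolding tmult_def
  apply (simp only: list.size add_Suc_right add_0_right sum.atLeast0_atMost_Suc_shift)
  by simp

lemma tmult_lin1: "tmult (\<lambda>v. c * f v + g v) z w = c * tmult f z w + tmult g z w"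
  unfolding tmult_def by (simp add: algebra_simps sum.distrib sum_distrib_left)

lemma tmult_assoc: "tmult (tmult x y) z = tmult x (tmult y z)"
proof
  fix w show "tmult (tmult x y) z w = tmult x (tmult y z) w"
  proof (induction w arbitrary: x)
    case Nil
    then show ?case by (simp add: tmult_Nil)
  next
    case (Cons a w)
    have e: "(\<lambda>v. tmult x y (a#v)) = (\<lambda>v. x [] * y (a#v) + tmult (\<lambda>v. x (a#v)) y v)"
      by (simp add: tmult_Cons)
    show ?case
      apply (simp only: tmult_Cons e tmult_lin1 tmult_Nil)
      using Cons.IH by (simp add: algebra_simps)
  qed
qed

lemma tmult_add1: "tmult (tadd x y) z = tadd (tmult x z) (tmult y z)"
  unfolding tmult_def tadd_def by (auto simp: algebra_simps sum.distrib)
lemma tmult_add2: "tmult z (tadd x y) = tadd (tmult z x) (tmult z y)"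
  unfolding tmult_def tadd_def by (auto simp: algebra_simps sum.distrib)
lemma tmult_scale1: "tmult (tscale c x) y = tscale c (tmult x y)"
  unfolding tmult_def tscale_def by (auto simp: algebra_simps sum_distrib_left)
lemma tmult_scale2: "tmult x (tscale c y) = tscale c (tmult x y)"
  unfolding tmult_def tscale_def by (auto simp: algebra_simps sum_distrib_left)
lemma tmult_zero1: "tmult (\<lambda>_. 0) y = (\<lambda>_. 0)"
  unfolding tmult_def by auto
lemma tmult_zero2: "tmult y (\<lambda>_. 0) = (\<lambda>_. 0)"
  unfolding tmult_def by auto

lemma tmult_unit1: "tmult (tmono []) x = x"
proof
  fix w show "tmult (tmono []) x w = x w"
    by (cases w) (simp_all add: tmult_Nil tmult_Cons tmono_def tmult_zero1)
qed

lemma tmult_unit2: "tmult x (tmono []) = x"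
proof
  fix w show "tmult x (tmono []) w = x w"
    by (induction w arbitrary: x) (simp_all add: tmult_Nil tmult_Cons tmono_def)
qed

lemma tmult_nonzero:
  assumes "tmult x y w \<noteq> 0"
  shows "\<exists>i. x (take i w) \<noteq> 0 \<and> y (drop i w) \<noteq> 0"
proof (rule ccontr)
  assume "\<not> ?thesis"
  then have "\<forall>i. x (take i w) * y (drop i w) = 0" by auto
  then have "tmult x y w = 0" unfolding tmult_def by (intro sum.neutral) auto
  with assms show False by simp
qed

lemma tens_mult: assumes "x \<in> tens W" "y \<in> tens W" shows "tmult x y \<in> tens W"
proof -
  let ?Sx = "{w. x w \<noteq> 0}" and ?Sy = "{w. y w \<noteq> 0}"
  have fx: "finite ?Sx" and fy: "finite ?Sy" using assms by (auto simp: tens_def)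
  have sub: "{w. tmult x y w \<noteq> 0} \<subseteq> (\<lambda>(u,v). u @ v) ` (?Sx \<times> ?Sy)"
  proof
    fix w assume "w \<in> {w. tmult x y w \<noteq> 0}"
    then obtain i where "x (take i w) \<noteq> 0" "y (drop i w) \<noteq> 0"
      using tmult_nonzero by blast
    then show "w \<in> (\<lambda>(u,v). u @ v) ` (?Sx \<times> ?Sy)"
      by (auto intro!: image_eqI[where x="(take i w, drop i w)"])
  qed
  have "finite {w. tmult x y w \<noteq> 0}"
    using finite_subset[OF sub] fx fy by blast
  moreover have "set w \<subseteq> W" if nz: "tmult x y w \<noteq> 0" for w
  proof -
    obtain i where "x (take i w) \<noteq> 0" "y (drop i w) \<noteq> 0"
      using tmult_nonzero[OF nz] by blast
    then have "set (take i w) \<subseteq> W" "set (drop i w) \<subseteq> W" using assms by (auto simp: tens_def)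
    then show ?thesis by (metis append_take_drop_id set_append Un_subset_iff)
  qed
  ultimately show ?thesis by (auto simp: tens_def)
qed

lemma tens_add: "x \<in> tens W \<Longrightarrow> y \<in> tens W \<Longrightarrow> tadd x y \<in> tens W"
proof -
  assume a: "x \<in> tens W" "y \<in> tens W"
  have "{w. tadd x y w \<noteq> 0} \<subseteq> {w. x w \<noteq> 0} \<union> {w. y w \<noteq> 0}" by (auto simp: tadd_def)
  then show ?thesis using a unfolding tens_def by (auto simp: tadd_def intro: finite_subset)
qed

lemma tens_scale: "x \<in> tens W \<Longrightarrow> tscale c x \<in> tens W"
proof -
  assume a: "x \<in> tens W"
  have "{w. tscale c x w \<noteq> 0} \<subseteq> {w. x w \<noteq> 0}" by (auto simp: tscale_def)
  then show ?thesis using a unfolding tens_def by (auto simp: tscale_def intro: finite_subset)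
qed

lemma tens_sub: "x \<in> tens W \<Longrightarrow> y \<in> tens W \<Longrightarrow> tsub x y \<in> tens W"
proof -
  assume a: "x \<in> tens W" "y \<in> tens W"
  have "tsub x y = tadd x (tscale (-1) y)" by (auto simp: tsub_def tadd_def tscale_def)
  then show ?thesis using a tens_add tens_scale by metis
qed

lemma tens_zero: "(\<lambda>_. 0) \<in> tens W" by (simp add: tens_def)

lemma tens_mono: "set u \<subseteq> W \<Longrightarrow> tmono u \<in> tens W"
proof -
  assume "set u \<subseteq> W"
  moreover have "{w. tmono u w \<noteq> (0::'k::field)} = {u}" by (auto simp: tmono_def)
  ultimately show "tmono u \<in> tens W" by (auto simp: tens_def tmono_def)
qed

lemma I_scale: "x \<in> tideal W G \<Longrightarrow> tscale c x \<in> tideal W G"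
proof (induction rule: tideal.induct)
  case zero then show ?case by (simp add: tscale_def tideal.zero)
next
  case (gen g a b)
  have "tscale c (tmult (tmult a g) b) = tmult (tmult (tscale c a) g) b"
    by (simp add: tmult_scale1)
  then show ?case using gen tens_scale tideal.gen by metis
next
  case (add x y)
  have "tscale c (tadd x y) = tadd (tscale c x) (tscale c y)"
    by (auto simp: tscale_def tadd_def algebra_simps)
  then show ?case using add tideal.add by metis
qed

lemma I_sub: "x \<in> tideal W G \<Longrightarrow> y \<in> tideal W G \<Longrightarrow> tsub x y \<in> tideal W G"
proof -
  assume a: "x \<in> tideal W G" "y \<in> tideal W G"
  have "tsub x y = tadd x (tscale (-1) y)" by (auto simp: tsub_def tadd_def tscale_def)
  then show ?thesis using a I_scale tideal.add by metis
qed

lemma I_neg: "x \<in> tideal W G \<Longrightarrow> (\<lambda>w. - x w) \<in> tideal W G"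
proof -
  assume a: "x \<in> tideal W G"
  have "(\<lambda>w. - x w) = tscale (-1) x" by (auto simp: tscale_def)
  then show ?thesis using a I_scale by metis
qed

lemma I_gen: "g \<in> G \<Longrightarrow> g \<in> tideal W G"
  using tideal.gen[of g G "tmono []" W "tmono []"] tens_mono[of "[]" W]
  by (simp add: tmult_unit1 tmult_unit2)

lemma I_multr: "x \<in> tideal W G \<Longrightarrow> c \<in> tens W \<Longrightarrow> tmult x c \<in> tideal W G"
proof (induction rule: tideal.induct)
  case zero then show ?case by (simp add: tmult_zero1 tideal.zero)
next
  case (gen g a b)
  have "tmult (tmult (tmult a g) b) c = tmult (tmult a g) (tmult b c)" by (simp add: tmult_assoc)
  then show ?case using tideal.gen[of g G a W "tmult b c"] tens_mult gen by metis
next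
  case (add x y)
  then show ?case by (simp add: tmult_add1 tideal.add)
qed

lemma I_multl: "x \<in> tideal W G \<Longrightarrow> c \<in> tens W \<Longrightarrow> tmult c x \<in> tideal W G"
proof (induction rule: tideal.induct)
  case zero then show ?case by (simp add: tmult_zero2 tideal.zero)
next
  case (gen g a b)
  have "tmult c (tmult (tmult a g) b) = tmult (tmult (tmult c a) g) b" by (simp add: tmult_assoc)
  then show ?case using tideal.gen[of g G "tmult c a" W b] tens_mult gen by metis
next
  case (add x y)
  then show ?case by (simp add: tmult_add2 tideal.add)
qed

lemma I_tens: assumes "\<And>g. g \<in> G \<Longrightarrow> g \<in> tens W" shows "x \<in> tideal W G \<Longrightarrow> x \<in> tens W"
  by (induction rule: tideal.induct) (auto intro: tens_zero tens_mult tens_add assms)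




definition emb :: "('v \<Rightarrow> 'k::field) \<Rightarrow> 'v list \<Rightarrow> 'k" where
  "emb f w = (if length w = 1 then f (hd w) else 0)"

lemma emb_simps[simp]: "emb f [] = 0" "emb f [a] = f a" "emb f (a#b#w) = 0"
  by (auto simp: emb_def)

lemma tmult_emb: "tmult (emb f) (emb g) w = (if length w = 2 then f (w!0) * g (w!1) else 0)"
proof (cases "length w = 2")
  case True
  then obtain a b where "w = [a,b]"
    by (metis (no_types, lifting) One_nat_def Suc_length_conv length_0_conv numeral_2_eq_2)
  then show ?thesis by (simp add: tmult_Cons tmult_Nil)
next
  case False
  have "emb f (take i w) * emb g (drop i w) = 0" for i
  proof (rule ccontr)
    assume "\<not> ?thesis"
    then have "length (take i w) = 1" "length (drop i w) = 1"
      by (auto simp: emb_def split: if_splits)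
    then have "length w = 2" by (metis length_append append_take_drop_id one_add_one)
    with False show False by simp
  qed
  then have "tmult (emb f) (emb g) w = 0" unfolding tmult_def by (intro sum.neutral) auto
  then show ?thesis using False by simp
qed

lemma tmult_gen2:
  assumes "\<And>w. length w < 2 \<Longrightarrow> g w = 0"
  shows "tmult (tmult a g) b [u,v] = a [] * g [u,v] * b []"
proof -
  have "g [] = 0" "g [u] = 0" "g [v] = 0" using assms by auto
  then show ?thesis by (simp add: tmult_Cons tmult_Nil)
qed

lemma tmult_short:
  assumes "\<And>w. length w < 2 \<Longrightarrow> g w = 0" "length w < 2"
  shows "tmult (tmult a g) b w = 0"
proof -
  have "g [] = 0" "\<And>x. g [x] = 0" using assms(1) by auto
  moreover have "w = [] \<or> (\<exists>x. w = [x])" using assms(2)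
    by (metis One_nat_def length_0_conv length_Suc_conv less_2_cases)
  ultimately show ?thesis by (auto simp: tmult_Cons tmult_Nil)
qed

definition genv :: "'v \<Rightarrow> ('v \<times> 'v) set \<Rightarrow> 'v list \<Rightarrow> 'k::field" where
  "genv v E = (\<lambda>u. \<Sum>w\<in>{w. (v, w) \<in> E}. tmono [v, w] u)"

lemma genv_val:
  assumes "finite {w. (v, w) \<in> E}"
  shows "genv v E x = (if \<exists>w. x = [v,w] \<and> (v,w) \<in> E then 1 else 0)"
proof (cases "\<exists>w. x = [v,w] \<and> (v,w) \<in> E")
  case True
  then obtain w0 where w0: "x = [v,w0]" "(v,w0) \<in> E" by blast
  have "genv v E x = (\<Sum>w\<in>{w. (v, w) \<in> E}. if w0 = w then 1 else 0)"
    unfolding genv_def tmono_def w0 by (intro sum.cong) auto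
  also have "\<dots> = 1" using assms w0 by simp
  finally show ?thesis using True by simp
next
  case False
  then have "genv v E x = 0" unfolding genv_def tmono_def by (intro sum.neutral) auto
  then show ?thesis using False by (simp only: if_False)
qed

lemma RB_gens_alt: "RB_gens V rk E =
     {tmono [v, w] | v w. v \<in> Vplus V rk \<and> w \<in> Vplus V rk \<and> (v, w) \<notin> E} \<union>
     {genv v E | v. v \<in> V \<and> rk v \<ge> 2}"
  unfolding RB_gens_def genv_def by simp

lemma gens_short:
  assumes "g \<in> RB_gens V rk E" "length w \<noteq> 2"
  shows "g w = 0"
  using assms unfolding RB_gens_def
  by (auto simp: tmono_def intro!: sum.neutral)

lemma RB_short:
  assumes "z \<in> RB V rk E" "length w < 2"
  shows "z w = 0"
  using assms unfolding RB_def
proof (induction arbitrary: w rule: tideal.induct)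
  case zero then show ?case by simp
next
  case (gen g a b)
  have "\<And>w. length w < 2 \<Longrightarrow> g w = 0" using gens_short[OF gen(1)] by fastforce
  then show ?case using tmult_short gen by blast
next
  case (add x y) then show ?case by (simp add: tadd_def)
qed

lemma RB_inv:
  assumes "z \<in> RB V rk E" "finite V" "E \<subseteq> V \<times> V" "(u,w1) \<in> E" "(u,w2) \<in> E"
  shows "z [u,w1] = z [u,w2]"
  using assms(1) unfolding RB_def
proof (induction rule: tideal.induct)
  case zero then show ?case by simp
next
  case (gen g a b)
  have sh: "\<And>w. length w < 2 \<Longrightarrow> g w = 0" using gens_short[OF gen(1)] by fastforce
  have fin: "finite {w. (v, w) \<in> E}" for v
    using assms(2,3) by (rule_tac finite_subset[of _ V]) auto
  have "g [u,w1] = g [u,w2]"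
    using gen(1) assms(4,5) unfolding RB_gens_alt by (auto simp: tmono_def genv_val[OF fin])
  then show ?case by (simp add: tmult_gen2[OF sh])
next
  case (add x y) then show ?case by (simp add: tadd_def)
qed




lemma RB_complete:
  fixes z :: "'v list \<Rightarrow> 'k::field"
  assumes fin: "finite V" and Esub: "E \<subseteq> V \<times> V" and Erk: "\<And>u w. (u,w)\<in>E \<Longrightarrow> rk u = Suc (rk w)"
  shows "finite {w. z w \<noteq> 0} \<Longrightarrow>
    (\<forall>w. z w \<noteq> 0 \<longrightarrow> (\<exists>u v. w = [u,v] \<and> u \<in> Vplus V rk \<and> v \<in> Vplus V rk)) \<Longrightarrow>
    (\<forall>u w1 w2. (u,w1)\<in>E \<longrightarrow> (u,w2)\<in>E \<longrightarrow> z [u,w1] = z [u,w2]) \<Longrightarrow> z \<in> RB V rk E"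
proof (induction "card {w. z w \<noteq> 0}" arbitrary: z rule: less_induct)
  case less
  note fz = less.prems(1) and sz = less.prems(2) and iz = less.prems(3)
  have finE: "finite {w. (v, w) \<in> E}" for v
    using fin Esub by (rule_tac finite_subset[of _ V]) auto
  show ?case
  proof (cases "{w. z w \<noteq> 0} = {}")
    case True
    then have "z = (\<lambda>_. 0)" by auto
    then show ?thesis unfolding RB_def by (simp add: tideal.zero)
  next
    case False
    then obtain w0 where w0: "z w0 \<noteq> 0" by auto
    then obtain u v where uv: "w0 = [u,v]" "u \<in> Vplus V rk" "v \<in> Vplus V rk" using sz by blast
    define c where "c = z [u,v]"
    show ?thesis
    proof (cases "(u,v) \<in> E")
      case False
      define z' where "z' = tsub z (tscale c (tmono [u,v]))"
      have z'v: "z' w = (if w = [u,v] then 0 else z w)" for w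
        by (auto simp: z'_def tsub_def tscale_def tmono_def c_def)
      have sub: "{w. z' w \<noteq> 0} \<subseteq> {w. z w \<noteq> 0} - {[u,v]}" by (auto simp: z'v)
      have lt: "card {w. z' w \<noteq> 0} < card {w. z w \<noteq> 0}"
        by (rule psubset_card_mono[OF fz]) (use sub w0 uv in auto)
      have h1: "z' \<in> RB V rk E"
      proof (rule less.hyps[OF lt])
        show "finite {w. z' w \<noteq> 0}" using finite_subset[OF sub] fz by blast
        show "\<forall>w. z' w \<noteq> 0 \<longrightarrow> (\<exists>u v. w = [u,v] \<and> u \<in> Vplus V rk \<and> v \<in> Vplus V rk)"
        proof (intro allI impI)
          fix w assume "z' w \<noteq> 0"
          then have "z w \<noteq> 0" using sub by blast
          then show "\<exists>u v. w = [u,v] \<and> u \<in> Vplus V rk \<and> v \<in> Vplus V rk" by (rule sz[rule_format])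
        qed
        show "\<forall>u' w1 w2. (u',w1)\<in>E \<longrightarrow> (u',w2)\<in>E \<longrightarrow> z' [u',w1] = z' [u',w2]"
        proof (intro allI impI)
          fix u' w1 w2 assume e: "(u',w1)\<in>E" "(u',w2)\<in>E"
          then have "[u',w1] \<noteq> [u,v]" "[u',w2] \<noteq> [u,v]" using False by auto
          then have "z' [u',w1] = z [u',w1]" "z' [u',w2] = z [u',w2]" by (simp_all only: z'v if_False)
          then show "z' [u',w1] = z' [u',w2]" using iz e by metis
        qed
      qed
      moreover have h2: "tscale c (tmono [u,v]) \<in> RB V rk E"
      proof -
        have "tmono [u,v] \<in> RB_gens V rk E" unfolding RB_gens_alt using uv False by blast
        then show ?thesis unfolding RB_def by (intro I_scale I_gen)
      qed
      moreover have eq: "z = tadd z' (tscale c (tmono [u,v]))"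
        by (rule ext) (simp add: z'_def tsub_def tadd_def)
      show ?thesis unfolding eq using h1 h2 unfolding RB_def by (rule tideal.add)
    next
      case True
      define z' where "z' = tsub z (tscale c (genv u E))"
      note uvE = True
      have z'v: "z' w = (if \<exists>w'. w = [u,w'] \<and> (u,w') \<in> E then 0 else z w)" for w
      proof (cases "\<exists>w'. w = [u,w'] \<and> (u,w') \<in> E")
        case True
        then obtain w' where ww: "w = [u,w']" "(u,w')\<in>E" by blast
        then have "z w = c" using iz uvE unfolding c_def by metis
        then show ?thesis using True by (simp add: z'_def tsub_def tscale_def genv_val[OF finE])
      next
        case False
        have g0: "genv u E w = (0::'k)" by (simp only: genv_val[OF finE] False if_False)
        show ?thesis by (simp only: z'_def tsub_def tscale_def g0 False if_False mult_zero_right diff_zero)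
      qed
      have sub: "{w. z' w \<noteq> 0} \<subseteq> {w. z w \<noteq> 0} - {[u,v]}"
      proof
        fix w assume "w \<in> {w. z' w \<noteq> 0}"
        then show "w \<in> {w. z w \<noteq> 0} - {[u,v]}" using uvE by (auto simp: z'v split: if_splits)
      qed
      have lt: "card {w. z' w \<noteq> 0} < card {w. z w \<noteq> 0}"
        by (rule psubset_card_mono[OF fz]) (use sub w0 uv in auto)
      have h1: "z' \<in> RB V rk E"
      proof (rule less.hyps[OF lt])
        show "finite {w. z' w \<noteq> 0}" using finite_subset[OF sub] fz by blast
        show "\<forall>w. z' w \<noteq> 0 \<longrightarrow> (\<exists>u v. w = [u,v] \<and> u \<in> Vplus V rk \<and> v \<in> Vplus V rk)"
        proof (intro allI impI)
          fix w assume "z' w \<noteq> 0"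
          then have "z w \<noteq> 0" using sub by blast
          then show "\<exists>u v. w = [u,v] \<and> u \<in> Vplus V rk \<and> v \<in> Vplus V rk" by (rule sz[rule_format])
        qed
        show "\<forall>u' w1 w2. (u',w1)\<in>E \<longrightarrow> (u',w2)\<in>E \<longrightarrow> z' [u',w1] = z' [u',w2]"
        proof (intro allI impI)
          fix u' w1 w2 assume e: "(u',w1)\<in>E" "(u',w2)\<in>E"
          show "z' [u',w1] = z' [u',w2]"
          proof (cases "u' = u")
            case True then show ?thesis using e by (simp add: z'v)
          next
            case False
            then have "z' [u',w1] = z [u',w1]" "z' [u',w2] = z [u',w2]" by (simp_all add: z'v)
            then show ?thesis using iz e by metis
          qed
        qed
      qed
      moreover have h2: "tscale c (genv u E) \<in> RB V rk E"
      proof -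
        have "u \<in> V" using uvE Esub by auto
        moreover have "rk u \<ge> 2" using Erk[OF True] uv(3) by (simp add: Vplus_def)
        ultimately have "genv u E \<in> RB_gens V rk E" unfolding RB_gens_alt by blast
        then show ?thesis unfolding RB_def by (intro I_scale I_gen)
      qed
      moreover have eq: "z = tadd z' (tscale c (genv u E))"
        by (rule ext) (simp add: z'_def tsub_def tadd_def)
      show ?thesis unfolding eq using h1 h2 unfolding RB_def by (rule tideal.add)
    qed
  qed
qed




definition layer :: "'v set \<Rightarrow> ('v \<Rightarrow> nat) \<Rightarrow> nat \<Rightarrow> 'v set" where
  "layer V rk i = {u\<in>V. rk u = i}"

definition vecs :: "'v set \<Rightarrow> ('v \<Rightarrow> 'k::field) set" where
  "vecs S = {f. \<forall>u. f u \<noteq> 0 \<longrightarrow> u \<in> S}"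

lemma len1: "length w = 1 \<Longrightarrow> w = [hd w]"
  by (cases w) auto

lemma emb_nz: "emb f w \<noteq> 0 \<Longrightarrow> w = [hd w] \<and> f (hd w) \<noteq> 0"
  unfolding emb_def by (auto split: if_splits intro: len1)

lemma emb_tens:
  assumes "f \<in> vecs S" "finite S" "S \<subseteq> W"
  shows "emb f \<in> tens W"
proof -
  have "{w. emb f w \<noteq> 0} \<subseteq> (\<lambda>u. [u]) ` S"
  proof
    fix w assume "w \<in> {w. emb f w \<noteq> 0}"
    then have "w = [hd w]" "f (hd w) \<noteq> 0" using emb_nz by auto
    moreover then have "hd w \<in> S" using assms(1) unfolding vecs_def by auto
    ultimately show "w \<in> (\<lambda>u. [u]) ` S" by (metis imageI)
  qed
  moreover have "set w \<subseteq> W" if "emb f w \<noteq> 0" for w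
  proof -
    have "w = [hd w]" "f (hd w) \<noteq> 0" using emb_nz[OF that] by auto
    moreover then have "hd w \<in> S" using assms(1) unfolding vecs_def by auto
    ultimately show ?thesis using assms(3) by (metis empty_subsetI insert_subset list.set(1) list.set(2) subsetD)
  qed
  ultimately show ?thesis unfolding tens_def using assms(2) finite_subset by blast
qed

lemma emb_homog:
  assumes "f \<in> vecs (layer V rk i)"
  shows "homog rk 1 i (emb f)"
  unfolding homog_def
proof (intro allI impI)
  fix w assume "emb f w \<noteq> 0"
  then obtain u where "w = [u]" "f u \<noteq> 0" using emb_nz by metis
  then show "length w = 1 \<and> sum_list (map rk w) = i" using assms by (auto simp: vecs_def layer_def)
qed

lemma emb_lin: "emb (\<lambda>u. c * f u + g u) = tadd (tscale c (emb f)) (emb g)"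
  by (auto simp: emb_def tadd_def tscale_def)

lemma emb_zero: "emb (\<lambda>_. 0) = (\<lambda>_. 0)"
  by (auto simp: emb_def)

lemma emb_diff:
  assumes "tsub (emb g) (emb g') \<in> RB V rk E"
  shows "g = g'"
proof
  fix q have "tsub (emb g) (emb g') [q] = 0" using RB_short[OF assms] by simp
  then show "g q = g' q" by (simp add: tsub_def)
qed

lemma cong_trans: "tsub a b \<in> tideal W G \<Longrightarrow> tsub b c \<in> tideal W G \<Longrightarrow> tsub a c \<in> tideal W G"
proof -
  assume "tsub a b \<in> tideal W G" "tsub b c \<in> tideal W G"
  moreover have "tadd (tsub a b) (tsub b c) = tsub a c" by (auto simp: tsub_def tadd_def)
  ultimately show ?thesis using tideal.add by metis
qed

lemma cong_sym: "tsub a b \<in> tideal W G \<Longrightarrow> tsub b a \<in> tideal W G"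
proof -
  assume "tsub a b \<in> tideal W G"
  moreover have "tsub b a = tscale (-1) (tsub a b)" by (auto simp: tsub_def tscale_def)
  ultimately show ?thesis by (metis I_scale)
qed

lemma cong_refl: "tsub a a \<in> tideal W G"
proof -
  have "tsub a a = (\<lambda>_. 0)" by (auto simp: tsub_def)
  then show ?thesis by (simp add: tideal.zero)
qed

lemma cong_lin: "tsub a b \<in> tideal W G \<Longrightarrow> tsub c d \<in> tideal W G \<Longrightarrow>
   tsub (tadd (tscale k a) c) (tadd (tscale k b) d) \<in> tideal W G"
proof -
  assume "tsub a b \<in> tideal W G" "tsub c d \<in> tideal W G"
  moreover have "tsub (tadd (tscale k a) c) (tadd (tscale k b) d) = tadd (tscale k (tsub a b)) (tsub c d)"
    by (auto simp: tsub_def tscale_def tadd_def algebra_simps)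
  ultimately show ?thesis by (metis I_scale tideal.add)
qed

lemma cong_mem: "tsub a b \<in> tideal W G \<Longrightarrow> a \<in> tideal W G \<longleftrightarrow> b \<in> tideal W G"
proof -
  assume h: "tsub a b \<in> tideal W G"
  have e1: "tsub a (tsub a b) = b" and e2: "tadd (tsub a b) b = a" by (auto simp: tsub_def tadd_def)
  show ?thesis
  proof
    assume "a \<in> tideal W G"
    from I_sub[OF this h] show "b \<in> tideal W G" unfolding e1 .
  next
    assume "b \<in> tideal W G"
    from tideal.add[OF h this] show "a \<in> tideal W G" unfolding e2 .
  qed
qed

lemma tmult_sub1: "tmult (tsub x y) z = tsub (tmult x z) (tmult y z)"
  unfolding tmult_def tsub_def by (auto simp: algebra_simps sum_subtractf)
lemma tmult_sub2: "tmult z (tsub x y) = tsub (tmult z x) (tmult z y)"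
  unfolding tmult_def tsub_def by (auto simp: algebra_simps sum_subtractf)

lemma cong_mult:
  assumes "tsub a a' \<in> tideal W G" "tsub b b' \<in> tideal W G" "b \<in> tens W" "a' \<in> tens W"
  shows "tsub (tmult a b) (tmult a' b') \<in> tideal W G"
proof -
  have "tsub (tmult a b) (tmult a' b') = tadd (tmult (tsub a a') b) (tmult a' (tsub b b'))"
    by (simp only: tmult_sub1 tmult_sub2) (auto simp: tsub_def tadd_def)
  moreover have "tmult (tsub a a') b \<in> tideal W G" by (rule I_multr[OF assms(1,3)])
  moreover have "tmult a' (tsub b b') \<in> tideal W G" by (rule I_multl[OF assms(2,4)])
  ultimately show ?thesis by (simp add: tideal.add)
qed

locale biso =
  fixes V1 :: "'a set" and rk1 :: "'a \<Rightarrow> nat" and E1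
    and V2 :: "'b set" and rk2 :: "'b \<Rightarrow> nat" and E2
    and phi :: "('a list \<Rightarrow> 'k::field) \<Rightarrow> ('b list \<Rightarrow> 'k)"
  assumes iso: "graded_B_iso V1 rk1 E1 V2 rk2 E2 phi"
    and fin1: "finite V1" and Es1: "E1 \<subseteq> V1 \<times> V1" and Erk1: "\<And>u w. (u,w)\<in>E1 \<Longrightarrow> rk1 u = Suc (rk1 w)"
    and fin2: "finite V2" and Es2: "E2 \<subseteq> V2 \<times> V2" and Erk2: "\<And>u w. (u,w)\<in>E2 \<Longrightarrow> rk2 u = Suc (rk2 w)"
begin

abbreviation "T1 \<equiv> tens (Vplus V1 rk1) :: ('a list \<Rightarrow> 'k) set"
abbreviation "T2 \<equiv> tens (Vplus V2 rk2) :: ('b list \<Rightarrow> 'k) set"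
abbreviation "I1 \<equiv> RB V1 rk1 E1 :: ('a list \<Rightarrow> 'k) set"
abbreviation "I2 \<equiv> RB V2 rk2 E2 :: ('b list \<Rightarrow> 'k) set"

lemmas iso_unf = iso[unfolded graded_B_iso_def Let_def]
lemmas iso_c1 = conjunct1[OF iso_unf]
lemmas iso_c2 = conjunct1[OF conjunct2[OF iso_unf]]
lemmas iso_c3 = conjunct1[OF conjunct2[OF conjunct2[OF iso_unf]]]
lemmas iso_c4 = conjunct1[OF conjunct2[OF conjunct2[OF conjunct2[OF iso_unf]]]]
lemmas iso_c5 = conjunct1[OF conjunct2[OF conjunct2[OF conjunct2[OF conjunct2[OF iso_unf]]]]]
lemmas iso_c6 = conjunct1[OF conjunct2[OF conjunct2[OF conjunct2[OF conjunct2[OF conjunct2[OF iso_unf]]]]]]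
lemmas iso_c8 = conjunct2[OF conjunct2[OF conjunct2[OF conjunct2[OF conjunct2[OF conjunct2[OF conjunct2[OF iso_unf]]]]]]]
lemma phi_T: "x \<in> T1 \<Longrightarrow> phi x \<in> T2" using iso_c1 by blast
lemma phi_resp: "x \<in> T1 \<Longrightarrow> y \<in> T1 \<Longrightarrow> tsub x y \<in> I1 \<Longrightarrow> tsub (phi x) (phi y) \<in> I2"
  using iso_c2 by blast
lemma phi_refl: "x \<in> T1 \<Longrightarrow> y \<in> T1 \<Longrightarrow> tsub (phi x) (phi y) \<in> I2 \<Longrightarrow> tsub x y \<in> I1"
  using iso_c3 by blast
lemma phi_surj: "z \<in> T2 \<Longrightarrow> \<exists>x\<in>T1. tsub (phi x) z \<in> I2"
  using iso_c4 by blast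
lemma phi_lin: "x \<in> T1 \<Longrightarrow> y \<in> T1 \<Longrightarrow>
   tsub (phi (tadd (tscale c x) y)) (tadd (tscale c (phi x)) (phi y)) \<in> I2"
  using iso_c5 by blast
lemma phi_mult: "x \<in> T1 \<Longrightarrow> y \<in> T1 \<Longrightarrow> tsub (phi (tmult x y)) (tmult (phi x) (phi y)) \<in> I2"
  using iso_c6 by blast
lemma phi_grad: "x \<in> T1 \<Longrightarrow> homog rk1 m n x \<Longrightarrow> \<exists>y\<in>T2. homog rk2 m n y \<and> tsub (phi x) y \<in> I2"
  using iso_c8 by blast

lemma phi0: "phi (\<lambda>_. 0) \<in> I2"
proof -
  have z: "(\<lambda>_. 0) \<in> T1" by (rule tens_zero)
  have "tsub (phi (tadd (tscale 1 (\<lambda>_. 0)) (\<lambda>_. 0))) (tadd (tscale 1 (phi (\<lambda>_. 0))) (phi (\<lambda>_. 0))) \<in> I2"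
    using phi_lin[OF z z] .
  moreover have "tadd (tscale 1 (\<lambda>_. 0)) (\<lambda>_. 0) = (\<lambda>_::'a list. 0::'k)" by (auto simp: tadd_def tscale_def)
  ultimately have "tsub (phi (\<lambda>_. 0)) (tadd (tscale 1 (phi (\<lambda>_. 0))) (phi (\<lambda>_. 0))) \<in> I2" by simp
  moreover have "tsub (phi (\<lambda>_. 0)) (tadd (tscale 1 (phi (\<lambda>_. 0))) (phi (\<lambda>_. 0))) = (\<lambda>w. - phi (\<lambda>_. 0) w)"
    by (auto simp: tsub_def tadd_def tscale_def)
  ultimately have "(\<lambda>w. - phi (\<lambda>_. 0) w) \<in> I2" by simp
  then have "(\<lambda>w. - (- phi (\<lambda>_. 0) w)) \<in> I2" unfolding RB_def by (rule I_neg)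
  then show ?thesis by simp
qed

lemma layer1_sub: "i \<ge> 1 \<Longrightarrow> layer V1 rk1 i \<subseteq> Vplus V1 rk1" by (auto simp: layer_def Vplus_def)
lemma layer2_sub: "i \<ge> 1 \<Longrightarrow> layer V2 rk2 i \<subseteq> Vplus V2 rk2" by (auto simp: layer_def Vplus_def)
lemma layer1_fin: "finite (layer V1 rk1 i)" using fin1 by (auto simp: layer_def)
lemma layer2_fin: "finite (layer V2 rk2 i)" using fin2 by (auto simp: layer_def)

lemma emb1_T: "i \<ge> 1 \<Longrightarrow> f \<in> vecs (layer V1 rk1 i) \<Longrightarrow> emb f \<in> T1"
  by (erule emb_tens[OF _ layer1_fin layer1_sub])
lemma emb2_T: "i \<ge> 1 \<Longrightarrow> f \<in> vecs (layer V2 rk2 i) \<Longrightarrow> emb f \<in> T2"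
  by (erule emb_tens[OF _ layer2_fin layer2_sub])

lemma L_ex:
  assumes "i \<ge> 1" "f \<in> vecs (layer V1 rk1 i)"
  shows "\<exists>g. g \<in> vecs (layer V2 rk2 i) \<and> tsub (phi (emb f)) (emb g) \<in> I2"
proof -
  obtain y where y: "y \<in> T2" "homog rk2 1 i y" "tsub (phi (emb f)) y \<in> I2"
    using phi_grad[OF emb1_T[OF assms] emb_homog[OF assms(2)]] by blast
  define g where "g = (\<lambda>q. y [q])"
  have yg: "y = emb g"
  proof
    fix w show "y w = emb g w"
    proof (cases "y w = 0")
      case True
      show ?thesis
      proof (cases "length w = 1")
        case True
        then obtain q where "w = [q]" by (metis One_nat_def length_0_conv length_Suc_conv)
        then show ?thesis by (simp add: g_def)
      next
        case False
        then show ?thesis using \<open>y w = 0\<close> by (simp add: emb_def)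
      qed
    next
      case False
      then have "length w = 1" using y(2) unfolding homog_def by blast
      then obtain q where "w = [q]" by (metis One_nat_def length_0_conv length_Suc_conv)
      then show ?thesis by (simp add: g_def)
    qed
  qed
  moreover have gv: "g \<in> vecs (layer V2 rk2 i)"
    unfolding vecs_def
  proof (intro CollectI allI impI)
    fix q assume "g q \<noteq> 0"
    then have "y [q] \<noteq> 0" by (simp add: g_def)
    then have "rk2 q = i" "set [q] \<subseteq> Vplus V2 rk2" using y(1,2) unfolding homog_def tens_def by auto
    then show "q \<in> layer V2 rk2 i" by (auto simp: layer_def Vplus_def)
  qed
  have "tsub (phi (emb f)) (emb g) \<in> I2" using y(3) unfolding yg .
  then show ?thesis using gv by blast
qed

definition Lmap :: "nat \<Rightarrow> ('a \<Rightarrow> 'k) \<Rightarrow> ('b \<Rightarrow> 'k)" where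
  "Lmap i f = (SOME g. g \<in> vecs (layer V2 rk2 i) \<and> tsub (phi (emb f)) (emb g) \<in> I2)"

lemma L_prop:
  assumes "i \<ge> 1" "f \<in> vecs (layer V1 rk1 i)"
  shows "Lmap i f \<in> vecs (layer V2 rk2 i)" "tsub (phi (emb f)) (emb (Lmap i f)) \<in> I2"
  using someI_ex[OF L_ex[OF assms]] unfolding Lmap_def by blast+

lemma L_unique:
  assumes "i \<ge> 1" "f \<in> vecs (layer V1 rk1 i)" "tsub (phi (emb f)) (emb g) \<in> I2"
  shows "Lmap i f = g"
proof -
  have "tsub (emb (Lmap i f)) (emb g) \<in> I2"
    using cong_trans[OF cong_sym[OF L_prop(2)[OF assms(1,2), unfolded RB_def]] assms(3)[unfolded RB_def]]
    unfolding RB_def .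
  then show ?thesis by (rule emb_diff)
qed

lemma vecs_lin: "f \<in> vecs S \<Longrightarrow> g \<in> vecs S \<Longrightarrow> (\<lambda>u. c * f u + g u) \<in> vecs S"
  unfolding vecs_def by (auto, metis add_0 mult_zero_right)

lemma L_lin:
  assumes "i \<ge> 1" "f \<in> vecs (layer V1 rk1 i)" "f' \<in> vecs (layer V1 rk1 i)"
  shows "Lmap i (\<lambda>u. c * f u + f' u) = (\<lambda>q. c * Lmap i f q + Lmap i f' q)"
proof (rule L_unique[OF assms(1) vecs_lin[OF assms(2,3)]])
  have "tsub (phi (tadd (tscale c (emb f)) (emb f'))) (tadd (tscale c (phi (emb f))) (phi (emb f'))) \<in> I2"
    by (rule phi_lin[OF emb1_T[OF assms(1,2)] emb1_T[OF assms(1,3)]])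
  moreover have "tsub (tadd (tscale c (phi (emb f))) (phi (emb f'))) (tadd (tscale c (emb (Lmap i f))) (emb (Lmap i f'))) \<in> I2"
    using cong_lin L_prop(2)[OF assms(1,2)] L_prop(2)[OF assms(1,3)] unfolding RB_def by blast
  ultimately show "tsub (phi (emb (\<lambda>u. c * f u + f' u))) (emb (\<lambda>q. c * Lmap i f q + Lmap i f' q)) \<in> I2"
    unfolding emb_lin RB_def by (rule cong_trans)
qed

lemma L_zero: "i \<ge> 1 \<Longrightarrow> Lmap i (\<lambda>_. 0) = (\<lambda>_. 0)"
  apply (rule L_unique)
    apply (auto simp: vecs_def emb_zero)
  using phi0 by (simp add: tsub_def)

lemma L_inj:
  assumes "i \<ge> 1" "f \<in> vecs (layer V1 rk1 i)" "f' \<in> vecs (layer V1 rk1 i)" "Lmap i f = Lmap i f'"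
  shows "f = f'"
proof -
  have "tsub (phi (emb f)) (phi (emb f')) \<in> I2"
    using cong_trans[OF L_prop(2)[OF assms(1,2), unfolded RB_def assms(4)] cong_sym[OF L_prop(2)[OF assms(1,3), unfolded RB_def]]]
      unfolding RB_def .
  then have "tsub (emb f) (emb f') \<in> I1" using phi_refl emb1_T assms(1-3) by blast
  then show ?thesis by (rule emb_diff)
qed

lemma L_corr:
  assumes "i \<ge> 1" "j \<ge> 1" "f \<in> vecs (layer V1 rk1 i)" "h \<in> vecs (layer V1 rk1 j)"
  shows "tmult (emb f) (emb h) \<in> I1 \<longleftrightarrow> tmult (emb (Lmap i f)) (emb (Lmap j h)) \<in> I2"
proof -
  let ?a = "emb f" and ?b = "emb h"
  have a: "?a \<in> T1" using emb1_T[OF assms(1,3)] .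
  have b: "?b \<in> T1" using emb1_T[OF assms(2,4)] .
  have ab: "tmult ?a ?b \<in> T1" using tens_mult[OF a b] .
  have z: "(\<lambda>_. 0) \<in> T1" by (rule tens_zero)
  have s0: "tsub (tmult ?a ?b) (\<lambda>_. 0) = tmult ?a ?b" by (auto simp: tsub_def)
  have st1: "tmult ?a ?b \<in> I1 \<longleftrightarrow> tsub (phi (tmult ?a ?b)) (phi (\<lambda>_. 0)) \<in> I2"
  proof
    assume "tmult ?a ?b \<in> I1"
    then have "tsub (tmult ?a ?b) (\<lambda>_. 0) \<in> I1" by (simp only: s0)
    then show "tsub (phi (tmult ?a ?b)) (phi (\<lambda>_. 0)) \<in> I2" by (rule phi_resp[OF ab z])
  next
    assume "tsub (phi (tmult ?a ?b)) (phi (\<lambda>_. 0)) \<in> I2"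
    then have "tsub (tmult ?a ?b) (\<lambda>_. 0) \<in> I1" by (rule phi_refl[OF ab z])
    then show "tmult ?a ?b \<in> I1" by (simp only: s0)
  qed
  have st2: "tsub (phi (tmult ?a ?b)) (phi (\<lambda>_. 0)) \<in> I2 \<longleftrightarrow> phi (tmult ?a ?b) \<in> I2"
  proof -
    have e: "tsub (tsub (phi (tmult ?a ?b)) (phi (\<lambda>_. 0))) (phi (tmult ?a ?b)) = (\<lambda>w. - phi (\<lambda>_. 0) w)"
      by (auto simp: tsub_def)
    have "(\<lambda>w. - phi (\<lambda>_. 0) w) \<in> I2" using phi0 unfolding RB_def by (rule I_neg)
    then have "tsub (tsub (phi (tmult ?a ?b)) (phi (\<lambda>_. 0))) (phi (tmult ?a ?b)) \<in> I2" by (simp only: e)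
    then show ?thesis unfolding RB_def by (rule cong_mem)
  qed
  have st3: "phi (tmult ?a ?b) \<in> I2 \<longleftrightarrow> tmult (phi ?a) (phi ?b) \<in> I2"
    using phi_mult[OF a b] unfolding RB_def by (rule cong_mem)
  have st4: "tmult (phi ?a) (phi ?b) \<in> I2 \<longleftrightarrow> tmult (emb (Lmap i f)) (emb (Lmap j h)) \<in> I2"
  proof -
    have c1: "tsub (phi ?a) (emb (Lmap i f)) \<in> I2" using L_prop(2)[OF assms(1,3)] .
    have c2: "tsub (phi ?b) (emb (Lmap j h)) \<in> I2" using L_prop(2)[OF assms(2,4)] .
    have t1: "phi ?b \<in> T2" using phi_T[OF b] .
    have t2: "emb (Lmap i f) \<in> T2" using emb2_T[OF assms(1) L_prop(1)[OF assms(1,3)]] .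
    have "tsub (tmult (phi ?a) (phi ?b)) (tmult (emb (Lmap i f)) (emb (Lmap j h))) \<in> I2"
      using cong_mult[OF c1[unfolded RB_def] c2[unfolded RB_def] t1 t2] unfolding RB_def .
    then show ?thesis unfolding RB_def by (rule cong_mem)
  qed
  show ?thesis using st1 st2 st3 st4 by simp
qed

end



context biso begin

definition rho :: "nat \<Rightarrow> ('a list \<Rightarrow> 'k) \<Rightarrow> 'a \<Rightarrow> 'k" where
  "rho i x = (\<lambda>u. if u \<in> layer V1 rk1 i then x [u] else 0)"
definition pf :: "nat \<Rightarrow> ('b list \<Rightarrow> 'k) \<Rightarrow> 'b \<Rightarrow> 'k" where
  "pf i y = (\<lambda>q. if q \<in> layer V2 rk2 i then y [q] else 0)"

lemma rho_vecs: "rho i x \<in> vecs (layer V1 rk1 i)" by (auto simp: rho_def vecs_def)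

lemma pf_I: "z \<in> I2 \<Longrightarrow> pf i z = (\<lambda>_. 0)"
  by (auto simp: pf_def RB_short)

lemma pf_cong: assumes "tsub y y' \<in> I2" shows "pf i y = pf i y'"
proof
  fix q have "tsub y y' [q] = 0" using RB_short[OF assms] by simp
  then show "pf i y q = pf i y' q" by (simp add: pf_def tsub_def)
qed

lemma pf_lin: "pf i (tadd (tscale c y) y') = (\<lambda>q. c * pf i y q + pf i y' q)"
  by (auto simp: pf_def tadd_def tscale_def)

lemma rho_lin: "rho i (tadd (tscale c x) x') = (\<lambda>u. c * rho i x u + rho i x' u)"
  by (auto simp: rho_def tadd_def tscale_def)

lemma pf_emb: "g \<in> vecs (layer V2 rk2 i) \<Longrightarrow> pf i (emb g) = g"
  unfolding pf_def vecs_def by (rule ext) auto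

lemma pf_phi: assumes "i \<ge> 1" shows "x \<in> T1 \<Longrightarrow> pf i (phi x) = Lmap i (rho i x)"
proof (induction "card {w. x w \<noteq> 0}" arbitrary: x rule: less_induct)
  case less
  have fx: "finite {w. x w \<noteq> 0}" using less.prems by (simp add: tens_def)
  show ?case
  proof (cases "{w. x w \<noteq> 0} = {}")
    case True
    then have x0: "x = (\<lambda>_. 0)" by auto
    have "rho i x = (\<lambda>_. 0)" by (auto simp: rho_def x0)
    then show ?thesis using pf_I[OF phi0] L_zero[OF assms] x0 by simp
  next
    case False
    then obtain w0 where w0: "x w0 \<noteq> 0" by auto
    define c where "c = x w0"
    define m where "m = (tmono w0 :: 'a list \<Rightarrow> 'k)"
    define x' where "x' = tsub x (tscale c m)"
    have sw0: "set w0 \<subseteq> Vplus V1 rk1" using less.prems w0 by (auto simp: tens_def)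
    have mT: "m \<in> T1" unfolding m_def using tens_mono[OF sw0] .
    have x'T: "x' \<in> T1" unfolding x'_def using tens_sub[OF less.prems tens_scale[OF mT]] .
    have x'v: "x' w = (if w = w0 then 0 else x w)" for w
      by (auto simp: x'_def tsub_def tscale_def m_def tmono_def c_def)
    have "{w. x' w \<noteq> 0} \<subset> {w. x w \<noteq> 0}" using w0 by (auto simp: x'v split: if_splits)
    then have lt: "card {w. x' w \<noteq> 0} < card {w. x w \<noteq> 0}" using psubset_card_mono[OF fx] by blast
    have IH: "pf i (phi x') = Lmap i (rho i x')" using less.hyps[OF lt x'T] .
    have xeq: "x = tadd (tscale c m) x'" by (auto simp: x'_def tsub_def tadd_def tscale_def)
    have "pf i (phi x) = (\<lambda>q. c * pf i (phi m) q + pf i (phi x') q)"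
    proof -
      have "tsub (phi (tadd (tscale c m) x')) (tadd (tscale c (phi m)) (phi x')) \<in> I2"
        by (rule phi_lin[OF mT x'T])
      then have "pf i (phi x) = pf i (tadd (tscale c (phi m)) (phi x'))"
        using pf_cong xeq by metis
      then show ?thesis by (simp add: pf_lin)
    qed
    moreover have "Lmap i (rho i x) = (\<lambda>q. c * Lmap i (rho i m) q + Lmap i (rho i x') q)"
    proof -
      have "rho i x = (\<lambda>u. c * rho i m u + rho i x' u)"
        using rho_lin xeq by metis
      then show ?thesis using L_lin[OF assms rho_vecs rho_vecs] by simp
    qed
    moreover have "pf i (phi m) = Lmap i (rho i m)"
    proof (cases "\<exists>u. w0 = [u] \<and> u \<in> layer V1 rk1 i")
      case True
      then obtain u where u: "w0 = [u]" "u \<in> layer V1 rk1 i" by blast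
      define d where "d = (\<lambda>v. if v = u then (1::'k) else 0)"
      have dv: "d \<in> vecs (layer V1 rk1 i)" using u by (auto simp: d_def vecs_def)
      have me: "m = emb d"
      proof
        fix w show "m w = emb d w"
          by (cases w rule: list.exhaust[case_product list.exhaust[of "tl w"]])
             (auto simp: m_def u d_def emb_def tmono_def)
      qed
      have rm: "rho i m = d" using u by (auto simp: rho_def me d_def)
      have "pf i (phi m) = pf i (emb (Lmap i d))" unfolding me using pf_cong L_prop(2)[OF assms dv] by blast
      then show ?thesis unfolding rm using pf_emb L_prop(1)[OF assms dv] by simp
    next
      case False
      have rm: "rho i m = (\<lambda>_. 0)" using False by (auto simp: rho_def m_def tmono_def)
      have hm: "homog rk1 (length w0) (sum_list (map rk1 w0)) m" by (simp add: homog_def m_def tmono_def)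
      obtain y where y: "y \<in> T2" "homog rk2 (length w0) (sum_list (map rk1 w0)) y" "tsub (phi m) y \<in> I2"
        using phi_grad[OF mT hm] by blast
      have "pf i y = (\<lambda>_. 0)"
      proof
        fix q show "pf i y q = 0"
        proof (rule ccontr)
          assume "pf i y q \<noteq> 0"
          then have q: "q \<in> layer V2 rk2 i" "y [q] \<noteq> 0" by (auto simp: pf_def split: if_splits)
          then have "length w0 = 1" "sum_list (map rk1 w0) = i" using y(2) q unfolding homog_def layer_def by auto
          then obtain u where "w0 = [u]" "rk1 u = i" using len1 by (metis list.simps(8,9) sum_list.Cons sum_list.Nil add_0_right)
          moreover then have "u \<in> V1" using sw0 by (auto simp: Vplus_def)
          ultimately show False using False by (auto simp: layer_def)
        qed
      qed
      then show ?thesis using pf_cong[OF y(3)] rm L_zero[OF assms] by simp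
    qed
    ultimately show ?thesis using IH by simp
  qed
qed

lemma L_surj:
  assumes "i \<ge> 1" "g \<in> vecs (layer V2 rk2 i)"
  shows "\<exists>f \<in> vecs (layer V1 rk1 i). Lmap i f = g"
proof -
  obtain x where x: "x \<in> T1" "tsub (phi x) (emb g) \<in> I2" using phi_surj emb2_T[OF assms] by blast
  have "g = pf i (emb g)" using pf_emb[OF assms(2)] by simp
  also have "\<dots> = pf i (phi x)" using pf_cong[OF x(2)] by simp
  also have "\<dots> = Lmap i (rho i x)" using pf_phi[OF assms(1) x(1)] .
  finally show ?thesis using rho_vecs by metis
qed

end



definition const_on :: "('v \<Rightarrow> 'k) \<Rightarrow> 'v set \<Rightarrow> bool" where
  "const_on h S \<longleftrightarrow> (\<forall>w1\<in>S. \<forall>w2\<in>S. h w1 = h w2)"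

definition nb :: "('v \<times> 'v) set \<Rightarrow> 'v \<Rightarrow> 'v set" where
  "nb E u = {w. (u,w) \<in> E}"

definition dl :: "'v \<Rightarrow> 'v \<Rightarrow> 'k::field" where
  "dl u = (\<lambda>v. if v = u then 1 else 0)"

lemma A_char:
  fixes f h :: "'v \<Rightarrow> 'k::field"
  assumes fin: "finite V" and Esub: "E \<subseteq> V \<times> V" and Erk: "\<And>u w. (u,w)\<in>E \<Longrightarrow> rk u = Suc (rk w)"
    and i: "2 \<le> i" and f: "f \<in> vecs (layer V rk i)" and h: "h \<in> vecs (layer V rk (i-1))"
  shows "tmult (emb f) (emb h) \<in> RB V rk E \<longleftrightarrow> (\<forall>u. f u \<noteq> 0 \<longrightarrow> const_on h (nb E u))"
proof
  assume z: "tmult (emb f) (emb h) \<in> RB V rk E"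
  show "\<forall>u. f u \<noteq> 0 \<longrightarrow> const_on h (nb E u)"
  proof (intro allI impI)
    fix u assume fu: "f u \<noteq> 0"
    show "const_on h (nb E u)" unfolding const_on_def nb_def
    proof (intro ballI)
      fix w1 w2 assume "w1 \<in> {w. (u, w) \<in> E}" "w2 \<in> {w. (u, w) \<in> E}"
      then have "tmult (emb f) (emb h) [u,w1] = tmult (emb f) (emb h) [u,w2]"
        using RB_inv[OF z fin Esub, of u w1 w2] by simp
      then have "f u * h w1 = f u * h w2" by (simp add: tmult_emb)
      then show "h w1 = h w2" using fu by simp
    qed
  qed
next
  assume c: "\<forall>u. f u \<noteq> 0 \<longrightarrow> const_on h (nb E u)"
  let ?z = "tmult (emb f) (emb h)"
  have zv: "?z w = (if length w = 2 then f (w!0) * h (w!1) else 0)" for w by (rule tmult_emb)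
  show "?z \<in> RB V rk E"
  proof (rule RB_complete[OF fin Esub Erk])
    have sub: "{w. ?z w \<noteq> 0} \<subseteq> (\<lambda>(u,v). [u,v]) ` (layer V rk i \<times> layer V rk (i-1))"
    proof
      fix w assume "w \<in> {w. ?z w \<noteq> 0}"
      then have nz: "?z w \<noteq> 0" by simp
      have l2: "length w = 2" using nz zv[of w] by (metis)
      have "f (w!0) * h (w!1) \<noteq> 0" using nz zv[of w] l2 by simp
      then have "f (w!0) \<noteq> 0" "h (w!1) \<noteq> 0" by auto
      moreover have "w = [w!0, w!1]" using l2
        by (cases w; cases "tl w") auto
      moreover note l2
      moreover have "w!0 \<in> layer V rk i" "w!1 \<in> layer V rk (i-1)"
        using calculation f h unfolding vecs_def by auto
      ultimately show "w \<in> (\<lambda>(u,v). [u,v]) ` (layer V rk i \<times> layer V rk (i-1))"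
        by (intro image_eqI[where x="(w!0, w!1)"]) auto
    qed
    have "finite (layer V rk i)" "finite (layer V rk (i-1))" using fin by (auto simp: layer_def)
    then have "finite ((\<lambda>(u,v). [u,v]) ` (layer V rk i \<times> layer V rk (i-1)))" by blast
    then show "finite {w. ?z w \<noteq> 0}" by (rule finite_subset[OF sub])
    show "\<forall>w. ?z w \<noteq> 0 \<longrightarrow> (\<exists>u v. w = [u,v] \<and> u \<in> Vplus V rk \<and> v \<in> Vplus V rk)"
    proof (intro allI impI)
      fix w assume "?z w \<noteq> 0"
      then have "w \<in> (\<lambda>(u,v). [u,v]) ` (layer V rk i \<times> layer V rk (i-1))" using sub by blast
      then obtain p where p: "p \<in> layer V rk i \<times> layer V rk (i-1)" "w = (\<lambda>(u,v). [u,v]) p" by blast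
      then obtain u v where "w = [u,v]" "u \<in> layer V rk i" "v \<in> layer V rk (i-1)" by (cases p) auto
      then show "\<exists>u v. w = [u,v] \<and> u \<in> Vplus V rk \<and> v \<in> Vplus V rk"
        using i by (auto simp: layer_def Vplus_def)
    qed
    show "\<forall>u w1 w2. (u,w1)\<in>E \<longrightarrow> (u,w2)\<in>E \<longrightarrow> ?z [u,w1] = ?z [u,w2]"
    proof (intro allI impI)
      fix u w1 w2 assume e: "(u,w1)\<in>E" "(u,w2)\<in>E"
      show "?z [u,w1] = ?z [u,w2]"
      proof (cases "f u = 0")
        case True then show ?thesis by (simp add: zv)
      next
        case False
        then have "h w1 = h w2" using c e unfolding const_on_def nb_def by blast
        then show ?thesis by (simp add: zv)
      qed
    qed
  qed
qed

context biso begin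

definition AP :: "nat \<Rightarrow> ('a \<Rightarrow> 'k) \<Rightarrow> ('a \<Rightarrow> 'k) set" where
  "AP i f = {h \<in> vecs (layer V1 rk1 (i-1)). \<forall>u. f u \<noteq> 0 \<longrightarrow> const_on h (nb E1 u)}"
definition AQ :: "nat \<Rightarrow> ('b \<Rightarrow> 'k) \<Rightarrow> ('b \<Rightarrow> 'k) set" where
  "AQ i f = {h \<in> vecs (layer V2 rk2 (i-1)). \<forall>u. f u \<noteq> 0 \<longrightarrow> const_on h (nb E2 u)}"

lemma A_transfer:
  assumes i: "2 \<le> i" and f: "f \<in> vecs (layer V1 rk1 i)" and h: "h \<in> vecs (layer V1 rk1 (i-1))"
  shows "h \<in> AP i f \<longleftrightarrow> Lmap (i-1) h \<in> AQ i (Lmap i f)"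
proof -
  have i1: "1 \<le> i" "1 \<le> i - 1" using i by auto
  have Lf: "Lmap i f \<in> vecs (layer V2 rk2 i)" using L_prop(1)[OF i1(1) f] .
  have Lh: "Lmap (i-1) h \<in> vecs (layer V2 rk2 (i-1))" using L_prop(1)[OF i1(2) h] .
  have "h \<in> AP i f \<longleftrightarrow> (\<forall>u. f u \<noteq> 0 \<longrightarrow> const_on h (nb E1 u))" using h by (simp add: AP_def)
  also have "\<dots> \<longleftrightarrow> tmult (emb f) (emb h) \<in> I1" using A_char[OF fin1 Es1 Erk1 i f h] by simp
  also have "\<dots> \<longleftrightarrow> tmult (emb (Lmap i f)) (emb (Lmap (i-1) h)) \<in> I2" by (rule L_corr[OF i1 f h])
  also have "\<dots> \<longleftrightarrow> (\<forall>u. Lmap i f u \<noteq> 0 \<longrightarrow> const_on (Lmap (i-1) h) (nb E2 u))"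
    using A_char[OF fin2 Es2 Erk2 i Lf Lh] by simp
  also have "\<dots> \<longleftrightarrow> Lmap (i-1) h \<in> AQ i (Lmap i f)" using Lh by (simp add: AQ_def)
  finally show ?thesis .
qed

lemma A_incl_transfer:
  assumes i: "2 \<le> i" and f: "f \<in> vecs (layer V1 rk1 i)" and f': "f' \<in> vecs (layer V1 rk1 i)"
  shows "AP i f \<subseteq> AP i f' \<longleftrightarrow> AQ i (Lmap i f) \<subseteq> AQ i (Lmap i f')"
proof
  assume s: "AP i f \<subseteq> AP i f'"
  show "AQ i (Lmap i f) \<subseteq> AQ i (Lmap i f')"
  proof
    fix z assume z: "z \<in> AQ i (Lmap i f)"
    then have "z \<in> vecs (layer V2 rk2 (i-1))" by (simp add: AQ_def)
    moreover have i2: "1 \<le> i - 1" using i by simp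
    ultimately obtain h where h: "h \<in> vecs (layer V1 rk1 (i-1))" "Lmap (i-1) h = z"
      using L_surj[OF i2] by blast
    then have "h \<in> AP i f" using A_transfer[OF i f h(1)] z by simp
    then have "h \<in> AP i f'" using s by blast
    then show "z \<in> AQ i (Lmap i f')" using A_transfer[OF i f' h(1)] h(2) by simp
  qed
next
  assume s: "AQ i (Lmap i f) \<subseteq> AQ i (Lmap i f')"
  show "AP i f \<subseteq> AP i f'"
  proof
    fix h assume h: "h \<in> AP i f"
    then have hv: "h \<in> vecs (layer V1 rk1 (i-1))" by (simp add: AP_def)
    then have "Lmap (i-1) h \<in> AQ i (Lmap i f)" using A_transfer[OF i f] h by blast
    then have "Lmap (i-1) h \<in> AQ i (Lmap i f')" using s by blast
    then show "h \<in> AP i f'" using A_transfer[OF i f' hv] by simp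
  qed
qed

end



lemma card2_other: "2 \<le> card S \<Longrightarrow> \<exists>w'\<in>S. w' \<noteq> w"
proof (rule ccontr)
  assume c: "2 \<le> card S" and "\<not> (\<exists>w'\<in>S. w' \<noteq> w)"
  then have "S \<subseteq> {w}" by blast
  then have "card S \<le> card {w}" by (intro card_mono) auto
  then have "card S \<le> 1" by simp
  with c show False by simp
qed

lemma dl_vecs: "u \<in> S \<Longrightarrow> dl u \<in> vecs S" by (auto simp: dl_def vecs_def)

lemma dl_nz: "dl u \<noteq> (\<lambda>_. (0::'k::field))"
proof
  assume "dl u = (\<lambda>_. (0::'k))"
  then have "dl u u = (0::'k)" by simp
  then show False by (simp add: dl_def)
qed

lemma const_scale: "(c::'k::field) \<noteq> 0 \<Longrightarrow> const_on (\<lambda>v. c * h v) S \<longleftrightarrow> const_on h S"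
  by (simp add: const_on_def)

context biso begin

lemma nb1_sub: assumes "u \<in> layer V1 rk1 i" shows "nb E1 u \<subseteq> layer V1 rk1 (i-1)"
proof
  fix w assume "w \<in> nb E1 u"
  then have e: "(u,w) \<in> E1" by (simp add: nb_def)
  then have "w \<in> V1" using Es1 by blast
  moreover have "rk1 u = Suc (rk1 w)" using Erk1[OF e] .
  ultimately show "w \<in> layer V1 rk1 (i-1)" using assms unfolding layer_def by simp arith
qed
lemma nb2_sub: assumes "u \<in> layer V2 rk2 i" shows "nb E2 u \<subseteq> layer V2 rk2 (i-1)"
proof
  fix w assume "w \<in> nb E2 u"
  then have e: "(u,w) \<in> E2" by (simp add: nb_def)
  then have "w \<in> V2" using Es2 by blast
  moreover have "rk2 u = Suc (rk2 w)" using Erk2[OF e] .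
  ultimately show "w \<in> layer V2 rk2 (i-1)" using assms unfolding layer_def by simp arith
qed
lemma nb2_fin: "finite (nb E2 u)"
proof -
  have "nb E2 u \<subseteq> V2" using Es2 by (auto simp: nb_def)
  then show ?thesis using fin2 finite_subset by blast
qed

lemma AP_supp: "(\<And>u. f u \<noteq> 0 \<longleftrightarrow> f' u \<noteq> 0) \<Longrightarrow> AP i f = AP i f'"
  unfolding AP_def by simp
lemma AQ_supp: "(\<And>u. f u \<noteq> 0 \<longleftrightarrow> f' u \<noteq> 0) \<Longrightarrow> AQ i f = AQ i f'"
  unfolding AQ_def by simp
lemma AP_sub_dl: "f u \<noteq> 0 \<Longrightarrow> AP i f \<subseteq> AP i (dl u)"
  unfolding AP_def dl_def by auto
lemma AQ_sub_dl: "f u \<noteq> 0 \<Longrightarrow> AQ i f \<subseteq> AQ i (dl u)"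
  unfolding AQ_def dl_def by auto
lemma AQ_dl: "AQ i (dl q) = {h \<in> vecs (layer V2 rk2 (i-1)). const_on h (nb E2 q)}"
  unfolding AQ_def dl_def by auto
lemma AP_dl: "AP i (dl q) = {h \<in> vecs (layer V1 rk1 (i-1)). const_on h (nb E1 q)}"
  unfolding AP_def dl_def by auto

definition maxP :: "nat \<Rightarrow> ('a \<Rightarrow> 'k) \<Rightarrow> bool" where
  "maxP i f \<longleftrightarrow> f \<in> vecs (layer V1 rk1 i) \<and> f \<noteq> (\<lambda>_. 0) \<and>
     (\<forall>f'\<in>vecs (layer V1 rk1 i). f' \<noteq> (\<lambda>_. 0) \<longrightarrow> AP i f \<subseteq> AP i f' \<longrightarrow> AP i f = AP i f')"
definition maxQ :: "nat \<Rightarrow> ('b \<Rightarrow> 'k) \<Rightarrow> bool" where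
  "maxQ i f \<longleftrightarrow> f \<in> vecs (layer V2 rk2 i) \<and> f \<noteq> (\<lambda>_. 0) \<and>
     (\<forall>f'\<in>vecs (layer V2 rk2 i). f' \<noteq> (\<lambda>_. 0) \<longrightarrow> AQ i f \<subseteq> AQ i f' \<longrightarrow> AQ i f = AQ i f')"

lemma L_nz:
  assumes i: "1 \<le> i" and f: "f \<in> vecs (layer V1 rk1 i)"
  shows "Lmap i f = (\<lambda>_. 0) \<longleftrightarrow> f = (\<lambda>_. 0)"
proof
  assume a: "Lmap i f = (\<lambda>_. 0)"
  have z: "(\<lambda>_. 0) \<in> vecs (layer V1 rk1 i)" by (simp add: vecs_def)
  have "Lmap i f = Lmap i (\<lambda>_. 0)" unfolding a L_zero[OF i] ..
  then show "f = (\<lambda>_. 0)" by (rule L_inj[OF i f z])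
next
  assume "f = (\<lambda>_. 0)" then show "Lmap i f = (\<lambda>_. 0)" using L_zero[OF i] by simp
qed

lemma M2:
  assumes i: "2 \<le> i" and f: "f \<in> vecs (layer V1 rk1 i)"
  shows "maxP i f \<longleftrightarrow> maxQ i (Lmap i f)"
proof -
  have i1: "1 \<le> i" using i by simp
  have Lf: "Lmap i f \<in> vecs (layer V2 rk2 i)" using L_prop(1)[OF i1 f] .
  show ?thesis
  proof
    assume m: "maxP i f"
    show "maxQ i (Lmap i f)" unfolding maxQ_def
    proof (intro conjI ballI impI)
      show "Lmap i f \<in> vecs (layer V2 rk2 i)" by (rule Lf)
      show "Lmap i f \<noteq> (\<lambda>_. 0)" using m L_nz[OF i1 f] by (simp add: maxP_def)
      fix g' assume g': "g' \<in> vecs (layer V2 rk2 i)" "g' \<noteq> (\<lambda>_. 0)" and s: "AQ i (Lmap i f) \<subseteq> AQ i g'"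
      obtain f' where f': "f' \<in> vecs (layer V1 rk1 i)" "Lmap i f' = g'" using L_surj[OF i1 g'(1)] by blast
      have "f' \<noteq> (\<lambda>_. 0)" using L_nz[OF i1 f'(1)] f'(2) g'(2) by simp
      moreover have "AP i f \<subseteq> AP i f'" using A_incl_transfer[OF i f f'(1)] s f'(2) by simp
      ultimately have "AP i f = AP i f'" using m f'(1) by (simp add: maxP_def)
      then have "AQ i (Lmap i f) \<subseteq> AQ i (Lmap i f') \<and> AQ i (Lmap i f') \<subseteq> AQ i (Lmap i f)"
        using A_incl_transfer[OF i f f'(1)] A_incl_transfer[OF i f'(1) f] by simp
      then show "AQ i (Lmap i f) = AQ i g'" using f'(2) by blast
    qed
  next
    assume m: "maxQ i (Lmap i f)"
    show "maxP i f" unfolding maxP_def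
    proof (intro conjI ballI impI)
      show "f \<in> vecs (layer V1 rk1 i)" by (rule f)
      show "f \<noteq> (\<lambda>_. 0)" using m L_nz[OF i1 f] by (simp add: maxQ_def)
      fix f' assume f': "f' \<in> vecs (layer V1 rk1 i)" "f' \<noteq> (\<lambda>_. 0)" and s: "AP i f \<subseteq> AP i f'"
      have "Lmap i f' \<noteq> (\<lambda>_. 0)" using L_nz[OF i1 f'(1)] f'(2) by simp
      moreover have "AQ i (Lmap i f) \<subseteq> AQ i (Lmap i f')" using A_incl_transfer[OF i f f'(1)] s by simp
      moreover have "Lmap i f' \<in> vecs (layer V2 rk2 i)" using L_prop(1)[OF i1 f'(1)] .
      ultimately have "AQ i (Lmap i f) = AQ i (Lmap i f')" using m by (simp add: maxQ_def)
      then show "AP i f = AP i f'"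
        using A_incl_transfer[OF i f f'(1)] A_incl_transfer[OF i f'(1) f] by blast
    qed
  qed
qed

lemma M3:
  assumes m: "maxQ i g" and q: "g q \<noteq> 0"
  shows "maxQ i (dl q)" "AQ i (dl q) = AQ i g"
proof -
  have qX: "q \<in> layer V2 rk2 i" using m q by (auto simp: maxQ_def vecs_def)
  have s: "AQ i g \<subseteq> AQ i (dl q)" by (rule AQ_sub_dl[of g q i, OF q])
  have mm: "\<forall>f'\<in>vecs (layer V2 rk2 i). f' \<noteq> (\<lambda>_. 0) \<longrightarrow> AQ i g \<subseteq> AQ i f' \<longrightarrow> AQ i g = AQ i f'"
    using m by (simp add: maxQ_def)
  show e: "AQ i (dl q) = AQ i g"
    using mm[rule_format, OF dl_vecs[OF qX] dl_nz s] by simp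
  show "maxQ i (dl q)" unfolding maxQ_def
  proof (intro conjI ballI impI)
    show "dl q \<in> vecs (layer V2 rk2 i)" using dl_vecs[OF qX] .
    show "dl q \<noteq> (\<lambda>_. 0)" by (rule dl_nz)
    fix g' assume g': "g' \<in> vecs (layer V2 rk2 i)" "g' \<noteq> (\<lambda>_. 0)" "AQ i (dl q) \<subseteq> AQ i g'"
    then have "AQ i g = AQ i g'" using mm[rule_format, OF g'(1,2)] e by simp
    then show "AQ i (dl q) = AQ i g'" using e by simp
  qed
qed

end



lemma const_dl:
  assumes "2 \<le> card S"
  shows "const_on (dl v :: 'v \<Rightarrow> 'k::field) S \<longleftrightarrow> v \<notin> S"
proof
  assume c: "const_on (dl v :: 'v \<Rightarrow> 'k) S"
  show "v \<notin> S"
  proof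
    assume v: "v \<in> S"
    obtain w' where w': "w' \<in> S" "w' \<noteq> v" using card2_other[OF assms] by blast
    have "(dl v v :: 'k) = dl v w'" using c v w'(1) unfolding const_on_def by blast
    then show False using w'(2) by (simp add: dl_def)
  qed
next
  assume "v \<notin> S"
  then show "const_on (dl v :: 'v \<Rightarrow> 'k) S" unfolding const_on_def dl_def by auto
qed

lemma const_small:
  assumes "finite S" "\<not> 2 \<le> card S"
  shows "const_on h S"
proof -
  have "card S \<le> 1" using assms(2) by simp
  then have "\<forall>w1\<in>S. \<forall>w2\<in>S. w1 = w2" using assms(1) card_le_Suc0_iff_eq by (metis One_nat_def)
  then show ?thesis unfolding const_on_def
  proof (intro ballI)
    fix w1 w2 assume a: "\<forall>w1\<in>S. \<forall>w2\<in>S. w1 = w2" "w1 \<in> S" "w2 \<in> S"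
    then have "w1 = w2" by blast
    then show "h w1 = h w2" by simp
  qed
qed

lemma scale_dl_vecs: "q \<in> S \<Longrightarrow> (\<lambda>v. c * dl q v) \<in> vecs S"
  by (auto simp: vecs_def dl_def)

context biso begin

definition goodP :: "nat \<Rightarrow> bool" where
  "goodP i \<longleftrightarrow> 2 \<le> i \<and> (\<forall>u\<in>layer V1 rk1 i. 2 \<le> card (nb E1 u)) \<and>
     (\<forall>u\<in>layer V1 rk1 i. \<forall>u'\<in>layer V1 rk1 i. u \<noteq> u' \<longrightarrow> \<not> nb E1 u \<subseteq> nb E1 u')"

lemma NN:
  assumes g: "goodP i" and u: "u \<in> layer V1 rk1 i" and u': "u' \<in> layer V1 rk1 i"
    and s: "AP i (dl u) \<subseteq> AP i (dl u')"
  shows "u = u'"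
proof (rule ccontr)
  assume ne: "u \<noteq> u'"
  have nn: "\<forall>a\<in>layer V1 rk1 i. \<forall>b\<in>layer V1 rk1 i. a \<noteq> b \<longrightarrow> \<not> nb E1 a \<subseteq> nb E1 b"
    using g by (simp add: goodP_def)
  have "u' \<noteq> u" using ne by simp
  then have "\<not> nb E1 u' \<subseteq> nb E1 u" using nn[rule_format, OF u' u] by simp
  then obtain w where w: "w \<in> nb E1 u'" "w \<notin> nb E1 u" by blast
  have c2: "2 \<le> card (nb E1 u')" using g u' unfolding goodP_def by blast
  obtain w' where w': "w' \<in> nb E1 u'" "w' \<noteq> w" using card2_other[OF c2] by blast
  have wY: "w \<in> layer V1 rk1 (i-1)" using nb1_sub[OF u'] w(1) by blast
  have "(dl w :: 'a \<Rightarrow> 'k) \<in> AP i (dl u)"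
    unfolding AP_dl using dl_vecs[OF wY] w(2) unfolding const_on_def dl_def by auto
  then have "(dl w :: 'a \<Rightarrow> 'k) \<in> AP i (dl u')" using s by blast
  then have "const_on (dl w :: 'a \<Rightarrow> 'k) (nb E1 u')" unfolding AP_dl by blast
  then have "(dl w w :: 'k) = dl w w'" using w(1) w'(1) unfolding const_on_def by blast
  then show False using w'(2) by (simp add: dl_def)
qed

lemma M1a:
  assumes g: "goodP i" and u: "u \<in> layer V1 rk1 i"
  shows "maxP i (dl u)"
  unfolding maxP_def
proof (intro conjI ballI impI)
  show "dl u \<in> vecs (layer V1 rk1 i)" using dl_vecs[OF u] .
  show "dl u \<noteq> (\<lambda>_. 0)" by (rule dl_nz)
  fix f' assume f': "f' \<in> vecs (layer V1 rk1 i)" "f' \<noteq> (\<lambda>_. 0)" and s: "AP i (dl u) \<subseteq> AP i f'"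
  have supp: "f' v \<noteq> 0 \<Longrightarrow> v = u" for v
  proof -
    assume fv: "f' v \<noteq> 0"
    then have vX: "v \<in> layer V1 rk1 i" using f'(1) by (simp add: vecs_def)
    have "AP i (dl u) \<subseteq> AP i (dl v)" using s AP_sub_dl[of f' v i, OF fv] by blast
    then show "v = u" using NN[OF g u vX] by simp
  qed
  have fu: "f' u \<noteq> 0"
  proof
    assume f0: "f' u = 0"
    have "f' = (\<lambda>_. 0)"
    proof
      fix v show "f' v = 0"
      proof (rule ccontr)
        assume "f' v \<noteq> 0"
        then have "v = u" by (rule supp)
        then show False using f0 \<open>f' v \<noteq> 0\<close> by simp
      qed
    qed
    then show False using f'(2) by simp
  qed
  have "(dl u v :: 'k) \<noteq> 0 \<longleftrightarrow> f' v \<noteq> 0" for v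
  proof (cases "v = u")
    case True then show ?thesis using fu by (simp add: dl_def)
  next
    case False
    then have "f' v = 0" using supp by blast
    then show ?thesis using False by (simp add: dl_def)
  qed
  then show "AP i (dl u) = AP i f'" by (rule AP_supp)
qed

lemma M1b:
  assumes g: "goodP i" and m: "maxP i f"
  shows "\<exists>u\<in>layer V1 rk1 i. \<forall>v. f v \<noteq> 0 \<longleftrightarrow> v = u"
proof -
  have fv: "f \<in> vecs (layer V1 rk1 i)" and fnz: "f \<noteq> (\<lambda>_. 0)" using m by (auto simp: maxP_def)
  have mm: "\<forall>f'\<in>vecs (layer V1 rk1 i). f' \<noteq> (\<lambda>_. 0) \<longrightarrow> AP i f \<subseteq> AP i f' \<longrightarrow> AP i f = AP i f'"
    using m by (simp add: maxP_def)
  obtain u where fu: "f u \<noteq> 0" using fnz by auto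
  have uX: "u \<in> layer V1 rk1 i" using fv fu by (simp add: vecs_def)
  have e: "AP i f = AP i (dl u)"
    using mm[rule_format, OF dl_vecs[OF uX] dl_nz AP_sub_dl[of f u i, OF fu]] .
  have "f v \<noteq> 0 \<longleftrightarrow> v = u" for v
  proof
    assume fv': "f v \<noteq> 0"
    then have vX: "v \<in> layer V1 rk1 i" using fv by (simp add: vecs_def)
    have "AP i (dl u) \<subseteq> AP i (dl v)" using e AP_sub_dl[of f v i, OF fv'] by simp
    then show "v = u" using NN[OF g uX vX] by simp
  next
    assume "v = u" then show "f v \<noteq> 0" using fu by simp
  qed
  then show ?thesis using uX by blast
qed

lemma M4:
  assumes g: "goodP i" and u: "u \<in> layer V1 rk1 i"
  shows "\<exists>q\<in>layer V2 rk2 i. \<exists>c. c \<noteq> 0 \<and> Lmap i (dl u) = (\<lambda>v. c * dl q v)"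
proof -
  have i: "2 \<le> i" using g by (simp add: goodP_def)
  then have i1: "1 \<le> i" by simp
  have du: "dl u \<in> vecs (layer V1 rk1 i)" using dl_vecs[OF u] .
  define m where "m = Lmap i (dl u)"
  have mQ: "maxQ i m" unfolding m_def using M2[OF i du] M1a[OF g u] by simp
  then have "m \<noteq> (\<lambda>_. 0)" "m \<in> vecs (layer V2 rk2 i)" by (auto simp: maxQ_def)
  then obtain q where mq: "m q \<noteq> 0" by auto
  have qX: "q \<in> layer V2 rk2 i" using \<open>m \<in> vecs _\<close> mq by (simp add: vecs_def)
  have e1: "AQ i (dl q) = AQ i m" using M3(2)[OF mQ mq] .
  obtain f where f: "f \<in> vecs (layer V1 rk1 i)" "Lmap i f = dl q"
    using L_surj[OF i1 dl_vecs[OF qX]] by blast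
  have mf: "maxP i f" using M2[OF i f(1)] M3(1)[OF mQ mq] f(2) by simp
  obtain u' where u': "u' \<in> layer V1 rk1 i" "\<forall>v. f v \<noteq> 0 \<longleftrightarrow> v = u'" using M1b[OF g mf] by blast
  have e2: "AP i f = AP i (dl u')" by (rule AP_supp) (use u'(2) in \<open>auto simp: dl_def\<close>)
  have "AQ i (Lmap i f) = AQ i (Lmap i (dl u))" using e1 f(2) m_def by simp
  then have "AP i f = AP i (dl u)"
    using A_incl_transfer[OF i f(1) du] A_incl_transfer[OF i du f(1)] by blast
  then have "AP i (dl u') \<subseteq> AP i (dl u)" using e2 by simp
  then have uu: "u' = u" using NN[OF g u'(1) u] by simp
  define c where "c = f u"
  have c0: "c \<noteq> 0" using u'(2) uu by (simp add: c_def)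
  have feq: "f = (\<lambda>v. c * dl u v + (\<lambda>_. 0) v)"
  proof
    fix v show "f v = c * dl u v + (\<lambda>_. 0) v"
      using u'(2) uu by (cases "v = u") (auto simp: c_def dl_def)
  qed
  have z: "(\<lambda>_. 0) \<in> vecs (layer V1 rk1 i)" by (simp add: vecs_def)
  have "Lmap i f = (\<lambda>q'. c * m q' + Lmap i (\<lambda>_. 0) q')"
    unfolding m_def by (subst feq, rule L_lin[OF i1 du z])
  then have dq: "dl q = (\<lambda>q'. c * m q')" using f(2) L_zero[OF i1] by simp
  have me: "m = (\<lambda>v. inverse c * dl q v)"
  proof
    fix v
    have "dl q v = c * m v" using fun_cong[OF dq, of v] by simp
    then show "m v = inverse c * dl q v" using c0 by simp
  qed
  have ic: "inverse c \<noteq> 0" using c0 by simp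
  have "Lmap i (dl u) = (\<lambda>v. inverse c * dl q v)" using me unfolding m_def .
  then have "\<exists>c. c \<noteq> 0 \<and> Lmap i (dl u) = (\<lambda>v. c * dl q v)" using ic by blast
  then show ?thesis using qX by blast
qed

definition gmap :: "nat \<Rightarrow> 'a \<Rightarrow> 'b" where
  "gmap i u = (SOME q. q \<in> layer V2 rk2 i \<and> (\<exists>c. c \<noteq> 0 \<and> Lmap i (dl u) = (\<lambda>v. c * dl q v)))"

lemma gmap_prop:
  assumes "goodP i" "u \<in> layer V1 rk1 i"
  shows "gmap i u \<in> layer V2 rk2 i" "\<exists>c. c \<noteq> 0 \<and> Lmap i (dl u) = (\<lambda>v. c * dl (gmap i u) v)"
  using someI_ex[OF M4[OF assms, unfolded Bex_def]] unfolding gmap_def by blast+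

lemma AQ_gmap:
  assumes "goodP i" "u \<in> layer V1 rk1 i"
  shows "AQ i (Lmap i (dl u)) = AQ i (dl (gmap i u))"
proof -
  obtain c where c: "c \<noteq> 0" "Lmap i (dl u) = (\<lambda>v. c * dl (gmap i u) v)" using gmap_prop(2)[OF assms] by blast
  show ?thesis unfolding c(2) by (rule AQ_supp) (use c(1) in auto)
qed

lemma gmap_inj:
  assumes g: "goodP i" and u: "u \<in> layer V1 rk1 i" and u': "u' \<in> layer V1 rk1 i"
    and e: "gmap i u = gmap i u'"
  shows "u = u'"
proof -
  have i: "2 \<le> i" using g by (simp add: goodP_def)
  have "AQ i (Lmap i (dl u)) = AQ i (Lmap i (dl u'))" using AQ_gmap[OF g u] AQ_gmap[OF g u'] e by simp
  then have "AP i (dl u) \<subseteq> AP i (dl u')" using A_incl_transfer[OF i dl_vecs[OF u] dl_vecs[OF u']] by simp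
  then show ?thesis using NN[OF g u u'] by simp
qed

lemma gmap_surj:
  assumes g: "goodP i" and q: "q \<in> layer V2 rk2 i"
  shows "\<exists>u\<in>layer V1 rk1 i. gmap i u = q"
proof (rule ccontr)
  assume nq: "\<not> (\<exists>u\<in>layer V1 rk1 i. gmap i u = q)"
  have i1: "1 \<le> i" using g by (simp add: goodP_def)
  have claim: "f \<in> vecs (layer V1 rk1 i) \<Longrightarrow> Lmap i f q = 0" for f
  proof (induction "card {v. f v \<noteq> 0}" arbitrary: f rule: less_induct)
    case less
    have "{v. f v \<noteq> 0} \<subseteq> layer V1 rk1 i" using less.prems by (auto simp: vecs_def)
    then have fin: "finite {v. f v \<noteq> 0}" using finite_subset layer1_fin by blast
    show ?case
    proof (cases "f = (\<lambda>_. 0)")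
      case True then show ?thesis using L_zero[OF i1] by simp
    next
      case False
      then obtain u where fu: "f u \<noteq> 0" by auto
      have uX: "u \<in> layer V1 rk1 i" using less.prems fu by (simp add: vecs_def)
      define f' where "f' = (\<lambda>v. if v = u then 0 else f v)"
      have f'v: "f' \<in> vecs (layer V1 rk1 i)" using less.prems by (auto simp: f'_def vecs_def)
      have "{v. f' v \<noteq> 0} \<subseteq> {v. f v \<noteq> 0}" by (auto simp: f'_def)
      moreover have "u \<in> {v. f v \<noteq> 0}" "u \<notin> {v. f' v \<noteq> 0}" using fu by (auto simp: f'_def)
      ultimately have "{v. f' v \<noteq> 0} \<subset> {v. f v \<noteq> 0}" by blast
      then have lt: "card {v. f' v \<noteq> 0} < card {v. f v \<noteq> 0}" using psubset_card_mono[OF fin] by blast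
      have IH: "Lmap i f' q = 0" using less.hyps[OF lt f'v] .
      have feq: "f = (\<lambda>v. f u * dl u v + f' v)"
      proof
        fix v show "f v = f u * dl u v + f' v" by (cases "v = u") (simp_all add: f'_def dl_def)
      qed
      have "Lmap i f = (\<lambda>q'. f u * Lmap i (dl u) q' + Lmap i f' q')"
        by (subst feq, rule L_lin[OF i1 dl_vecs[OF uX] f'v])
      then have l1: "Lmap i f q = f u * Lmap i (dl u) q + Lmap i f' q" by (rule fun_cong)
      obtain c where c: "Lmap i (dl u) = (\<lambda>v. c * dl (gmap i u) v)" using gmap_prop(2)[OF g uX] by blast
      have "gmap i u \<noteq> q" using nq uX by blast
      then have "Lmap i (dl u) q = 0" unfolding c by (simp add: dl_def)
      then show ?thesis using l1 IH by simp
    qed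
  qed
  obtain f where f: "f \<in> vecs (layer V1 rk1 i)" "Lmap i f = dl q" using L_surj[OF i1 dl_vecs[OF q]] by blast
  have "Lmap i f q = 0" using claim[OF f(1)] .
  then show False using f(2) by (simp add: dl_def)
qed

end



context biso begin

lemma edgeP:
  assumes g: "goodP i" and u: "u \<in> layer V1 rk1 i" and v: "v \<in> layer V1 rk1 (i-1)"
  shows "(dl v :: 'a \<Rightarrow> 'k) \<in> AP i (dl u) \<longleftrightarrow> v \<notin> nb E1 u"
proof -
  have c2: "2 \<le> card (nb E1 u)" using g u unfolding goodP_def by blast
  have "(dl v :: 'a \<Rightarrow> 'k) \<in> AP i (dl u) \<longleftrightarrow> const_on (dl v :: 'a \<Rightarrow> 'k) (nb E1 u)"
  proof -
    have dv: "(dl v :: 'a \<Rightarrow> 'k) \<in> vecs (layer V1 rk1 (i-1))" by (rule dl_vecs[OF v])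
    show ?thesis unfolding AP_dl using dv by simp
  qed
  also have "\<dots> \<longleftrightarrow> v \<notin> nb E1 u" by (rule const_dl[OF c2])
  finally show ?thesis .
qed

lemma card_Q:
  assumes g: "goodP i" and u: "u \<in> layer V1 rk1 i"
  shows "2 \<le> card (nb E2 (gmap i u))"
proof (rule ccontr)
  assume nc: "\<not> 2 \<le> card (nb E2 (gmap i u))"
  have i: "2 \<le> i" using g by (simp add: goodP_def)
  have i1: "1 \<le> i - 1" using i by simp
  have c2: "2 \<le> card (nb E1 u)" using g u unfolding goodP_def by blast
  then have "nb E1 u \<noteq> {}" by auto
  then obtain w where w: "w \<in> nb E1 u" by blast
  have wY: "w \<in> layer V1 rk1 (i-1)" using nb1_sub[OF u] w by blast
  have Lw: "Lmap (i-1) (dl w) \<in> vecs (layer V2 rk2 (i-1))" using L_prop(1)[OF i1 dl_vecs[OF wY]] .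
  have "const_on (Lmap (i-1) (dl w)) (nb E2 (gmap i u))" by (rule const_small[OF nb2_fin nc])
  then have "Lmap (i-1) (dl w) \<in> AQ i (dl (gmap i u))" unfolding AQ_dl using Lw by simp
  then have "Lmap (i-1) (dl w) \<in> AQ i (Lmap i (dl u))" using AQ_gmap[OF g u] by simp
  then have "(dl w :: 'a \<Rightarrow> 'k) \<in> AP i (dl u)" using A_transfer[OF i dl_vecs[OF u] dl_vecs[OF wY]] by simp
  then show False using edgeP[OF g u wY] w by simp
qed

lemma edges:
  assumes g: "goodP i" and g': "goodP (i-1)" and u: "u \<in> layer V1 rk1 i" and v: "v \<in> layer V1 rk1 (i-1)"
  shows "(u,v) \<in> E1 \<longleftrightarrow> (gmap i u, gmap (i-1) v) \<in> E2"
proof -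
  have i: "2 \<le> i" using g by (simp add: goodP_def)
  have i1: "1 \<le> i - 1" using i by simp
  obtain c' where c': "c' \<noteq> 0" "Lmap (i-1) (dl v) = (\<lambda>x. c' * dl (gmap (i-1) v) x)"
    using gmap_prop(2)[OF g' v] by blast
  have q'Y: "gmap (i-1) v \<in> layer V2 rk2 (i-1)" using gmap_prop(1)[OF g' v] .
  have "(u,v) \<in> E1 \<longleftrightarrow> \<not> ((dl v :: 'a \<Rightarrow> 'k) \<in> AP i (dl u))"
    using edgeP[OF g u v] by (simp add: nb_def)
  also have "\<dots> \<longleftrightarrow> \<not> (Lmap (i-1) (dl v) \<in> AQ i (dl (gmap i u)))"
    using A_transfer[OF i dl_vecs[OF u] dl_vecs[OF v]] AQ_gmap[OF g u] by simp
  also have "\<dots> \<longleftrightarrow> \<not> const_on (dl (gmap (i-1) v) :: 'b \<Rightarrow> 'k) (nb E2 (gmap i u))"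
  proof -
    have sv: "(\<lambda>x. c' * dl (gmap (i-1) v) x) \<in> vecs (layer V2 rk2 (i-1))" by (rule scale_dl_vecs[OF q'Y])
    show ?thesis unfolding AQ_dl c'(2) using sv const_scale[OF c'(1), of "dl (gmap (i-1) v)"] by simp
  qed
  also have "\<dots> \<longleftrightarrow> (gmap i u, gmap (i-1) v) \<in> E2"
  proof -
    have "const_on (dl (gmap (i-1) v) :: 'b \<Rightarrow> 'k) (nb E2 (gmap i u)) \<longleftrightarrow> gmap (i-1) v \<notin> nb E2 (gmap i u)"
      by (rule const_dl[OF card_Q[OF g u]])
    then show ?thesis by (simp add: nb_def)
  qed
  finally show ?thesis .
qed

end



definition cv :: "'a set \<Rightarrow> ('a \<Rightarrow> 'a \<Rightarrow> bool) \<Rightarrow> 'a \<Rightarrow> 'a \<Rightarrow> bool" where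
  "cv P le a b \<longleftrightarrow> covers P le b a"

lemma poset_rtc:
  assumes po: "is_poset P le" and fin: "finite P"
  shows "x \<in> P \<Longrightarrow> y \<in> P \<Longrightarrow> le x y \<longleftrightarrow> (cv P le)\<^sup>*\<^sup>* x y"
proof -
  have refl: "\<And>x. x \<in> P \<Longrightarrow> le x x" and anti: "\<And>x y. x \<in> P \<Longrightarrow> y \<in> P \<Longrightarrow> le x y \<Longrightarrow> le y x \<Longrightarrow> x = y"
    and trans: "\<And>x y z. x \<in> P \<Longrightarrow> y \<in> P \<Longrightarrow> z \<in> P \<Longrightarrow> le x y \<Longrightarrow> le y z \<Longrightarrow> le x z"
    using po unfolding is_poset_def by blast+
  have bwd: "(cv P le)\<^sup>*\<^sup>* x y \<Longrightarrow> x \<in> P \<Longrightarrow> le x y \<and> y \<in> P" for x y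
  proof (induction rule: rtranclp_induct)
    case base then show ?case using refl by blast
  next
    case (step b c)
    then have "le x b" "b \<in> P" "covers P le c b" by (auto simp: cv_def)
    then show ?case using trans[of x b c] step.prems unfolding covers_def by blast
  qed
  have fwd: "\<And>n x y. card {r\<in>P. le x r \<and> le r y} = n \<Longrightarrow> x \<in> P \<Longrightarrow> y \<in> P \<Longrightarrow> le x y \<Longrightarrow> (cv P le)\<^sup>*\<^sup>* x y"
  proof -
    fix n
    show "\<And>x y. card {r\<in>P. le x r \<and> le r y} = n \<Longrightarrow> x \<in> P \<Longrightarrow> y \<in> P \<Longrightarrow> le x y \<Longrightarrow> (cv P le)\<^sup>*\<^sup>* x y"
    proof (induction n rule: less_induct)
      case (less n x y)
      show ?case
      proof (cases "x = y")
        case True then show ?thesis by simp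
      next
        case ne: False
        show ?thesis
        proof (cases "\<exists>r\<in>P. le x r \<and> le r y \<and> r \<noteq> x \<and> r \<noteq> y")
          case False
          then have "covers P le y x" using less.prems ne unfolding covers_def by blast
          then have "cv P le x y" by (simp add: cv_def)
          then show ?thesis by (rule r_into_rtranclp)
        next
          case True
          then obtain r where r: "r \<in> P" "le x r" "le r y" "r \<noteq> x" "r \<noteq> y" by blast
          have finI: "finite {r\<in>P. le x r \<and> le r y}" using fin by simp
          have s1: "{s\<in>P. le x s \<and> le s r} \<subset> {r\<in>P. le x r \<and> le r y}"
          proof
            show "{s\<in>P. le x s \<and> le s r} \<subseteq> {r\<in>P. le x r \<and> le r y}"
              using trans r less.prems by blast
            have "y \<notin> {s\<in>P. le x s \<and> le s r}" using anti r less.prems by blast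
            moreover have "y \<in> {r\<in>P. le x r \<and> le r y}" using less.prems refl by blast
            ultimately show "{s\<in>P. le x s \<and> le s r} \<noteq> {r\<in>P. le x r \<and> le r y}" by blast
          qed
          have s2: "{s\<in>P. le r s \<and> le s y} \<subset> {r\<in>P. le x r \<and> le r y}"
          proof
            show "{s\<in>P. le r s \<and> le s y} \<subseteq> {r\<in>P. le x r \<and> le r y}"
              using trans r less.prems by blast
            have "x \<notin> {s\<in>P. le r s \<and> le s y}" using anti r less.prems by blast
            moreover have "x \<in> {r\<in>P. le x r \<and> le r y}" using less.prems refl by blast
            ultimately show "{s\<in>P. le r s \<and> le s y} \<noteq> {r\<in>P. le x r \<and> le r y}" by blast
          qed
          have c1: "card {s\<in>P. le x s \<and> le s r} < n" using psubset_card_mono[OF finI s1] less.prems(1) by simp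
          have c2: "card {s\<in>P. le r s \<and> le s y} < n" using psubset_card_mono[OF finI s2] less.prems(1) by simp
          have "(cv P le)\<^sup>*\<^sup>* x r" using less.IH[OF c1 HOL.refl] less.prems(2) r by blast
          moreover have "(cv P le)\<^sup>*\<^sup>* r y" using less.IH[OF c2 HOL.refl] less.prems(3) r by blast
          ultimately show ?thesis by simp
        qed
      qed
    qed
  qed
  assume xP: "x \<in> P" and yP: "y \<in> P"
  show ?thesis using fwd[OF HOL.refl xP yP] bwd[OF _ xP] by blast
qed

lemma ranked_cover:
  assumes "fin_ranked_poset_umin P le rk" "covers P le p q"
  shows "rk p = Suc (rk q)"
  using assms unfolding fin_ranked_poset_umin_def rank_function_def by simp

lemma rtc_rank:
  assumes "fin_ranked_poset_umin P le rk"
  shows "(cv P le)\<^sup>*\<^sup>* x y \<Longrightarrow> rk x \<le> rk y"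
proof (induction rule: rtranclp_induct)
  case base then show ?case by simp
next
  case (step b c)
  then show ?case using ranked_cover[OF assms, of c b] by (simp add: cv_def)
qed

definition cv2 :: "'a set \<Rightarrow> ('a \<Rightarrow> 'a \<Rightarrow> bool) \<Rightarrow> ('a \<Rightarrow> nat) \<Rightarrow> 'a \<Rightarrow> 'a \<Rightarrow> bool" where
  "cv2 P le rk a b \<longleftrightarrow> covers P le b a \<and> 2 \<le> rk a"

lemma poset_rtc2:
  assumes R: "fin_ranked_poset_umin P le rk" and x: "x \<in> P" "2 \<le> rk x" and y: "y \<in> P"
  shows "le x y \<longleftrightarrow> (cv2 P le rk)\<^sup>*\<^sup>* x y"
proof -
  have po: "is_poset P le" and fin: "finite P" using R by (auto simp: fin_ranked_poset_umin_def)
  have a: "(cv P le)\<^sup>*\<^sup>* x z \<Longrightarrow> (cv2 P le rk)\<^sup>*\<^sup>* x z" for z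
  proof (induction rule: rtranclp_induct)
    case base then show ?case by simp
  next
    case (step b c)
    have "rk x \<le> rk b" using rtc_rank[OF R step.hyps(1)] .
    then have "cv2 P le rk b c" using step.hyps(2) x(2) by (simp add: cv_def cv2_def)
    then show ?case using step.IH by simp
  qed
  have b: "(cv2 P le rk)\<^sup>*\<^sup>* x z \<Longrightarrow> (cv P le)\<^sup>*\<^sup>* x z" for z
  proof (induction rule: rtranclp_induct)
    case base then show ?case by simp
  next
    case (step b c)
    then have "cv P le b c" by (simp add: cv_def cv2_def)
    then show ?case using step.IH by (rule rtranclp.rtrancl_into_rtrancl[rotated])
  qed
  show ?thesis using poset_rtc[OF po fin x(1) y] a b by blast
qed




lemma nb_hasse: "nb (hasse_edges P le) u = S_cov P le u"
  by (simp add: nb_def hasse_edges_def S_cov_def)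

lemma hasse_sub: "hasse_edges P le \<subseteq> P \<times> P"
  by (auto simp: hasse_edges_def covers_def)

lemma hasse_rk: "fin_ranked_poset_umin P le rk \<Longrightarrow> (u,w) \<in> hasse_edges P le \<Longrightarrow> rk u = Suc (rk w)"
  using ranked_cover by (auto simp: hasse_edges_def)

theorem mainTheorem15:
  fixes P :: "'a set" and leP :: "'a \<Rightarrow> 'a \<Rightarrow> bool" and rkP :: "'a \<Rightarrow> nat"
    and Q :: "'b set" and leQ :: "'b \<Rightarrow> 'b \<Rightarrow> bool" and rkQ :: "'b \<Rightarrow> nat"
  assumes P: "fin_ranked_poset_umin P leP rkP"
    and nn: "non_nesting P leP"
    and Scard: "\<forall>p\<in>P. rkP p > 1 \<longrightarrow> card (S_cov P leP p) > 1"
    and Q: "fin_ranked_poset_umin Q leQ rkQ"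
    and QP: "B_equiv TYPE('k::field) Q leQ rkQ P leP rkP"
  shows "\<exists>f. bij_betw f {p\<in>P. rkP p \<ge> 2} {q\<in>Q. rkQ q \<ge> 2} \<and>
             (\<forall>x\<in>{p\<in>P. rkP p \<ge> 2}. \<forall>y\<in>{p\<in>P. rkP p \<ge> 2}. leP x y \<longleftrightarrow> leQ (f x) (f y)) \<and>
             (\<forall>x\<in>{p\<in>P. rkP p \<ge> 2}. rkQ (f x) = rkP x)"
proof -
  obtain phi :: "('a list \<Rightarrow> 'k) \<Rightarrow> ('b list \<Rightarrow> 'k)" where
    phi: "graded_B_iso P rkP (hasse_edges P leP) Q rkQ (hasse_edges Q leQ) phi"
    using QP unfolding B_equiv_def by blast
  have finP: "finite P" and finQ: "finite Q" using P Q by (auto simp: fin_ranked_poset_umin_def)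
  interpret B: biso P rkP "hasse_edges P leP" Q rkQ "hasse_edges Q leQ" phi
    by (unfold_locales) (use phi finP finQ hasse_sub hasse_rk P Q in auto)
  have good: "B.goodP i" if i: "2 \<le> i" for i
    unfolding B.goodP_def
  proof (intro conjI ballI impI)
    show "2 \<le> i" by (rule i)
    fix u assume u: "u \<in> layer P rkP i"
    then have "u \<in> P" "rkP u > 1" using i by (auto simp: layer_def)
    then have "card (S_cov P leP u) > 1" using Scard by blast
    then show "2 \<le> card (nb (hasse_edges P leP) u)" by (simp add: nb_hasse)
  next
    fix u u' assume u: "u \<in> layer P rkP i" and u': "u' \<in> layer P rkP i" and ne: "u \<noteq> u'"
    then have "u \<in> P" "rkP u > 1" "u' \<in> P" "rkP u' > 1" using i by (auto simp: layer_def)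
    then have "card (S_cov P leP u) > 1" "card (S_cov P leP u') > 1" using Scard by blast+
    then have "\<not> S_cov P leP u \<subseteq> S_cov P leP u'"
      using nn \<open>u \<in> P\<close> \<open>u' \<in> P\<close> ne unfolding non_nesting_def by blast
    then show "\<not> nb (hasse_edges P leP) u \<subseteq> nb (hasse_edges P leP) u'" by (simp add: nb_hasse)
  qed
  define f where "f u = B.gmap (rkP u) u" for u
  let ?P2 = "{p\<in>P. rkP p \<ge> 2}" and ?Q2 = "{q\<in>Q. rkQ q \<ge> 2}"
  have F1: "f u \<in> layer Q rkQ (rkP u)" if "u \<in> ?P2" for u
    unfolding f_def using B.gmap_prop(1)[OF good] that by (auto simp: layer_def)
  have F1': "f u \<in> Q" "rkQ (f u) = rkP u" if "u \<in> ?P2" for u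
    using F1[OF that] by (auto simp: layer_def)
  have F2: "u = u'" if "u \<in> ?P2" "u' \<in> ?P2" "f u = f u'" for u u'
  proof -
    have r: "rkP u = rkP u'" using F1'(2)[OF that(1)] F1'(2)[OF that(2)] that(3) by simp
    have "B.gmap (rkP u) u = B.gmap (rkP u) u'" using that(3) r by (simp add: f_def)
    then show ?thesis using B.gmap_inj[OF good] that(1,2) r by (auto simp: layer_def)
  qed
  have F3: "\<exists>u\<in>?P2. f u = q" if "q \<in> ?Q2" for q
  proof -
    have "q \<in> layer Q rkQ (rkQ q)" "2 \<le> rkQ q" using that by (auto simp: layer_def)
    then obtain u where "u \<in> layer P rkP (rkQ q)" "B.gmap (rkQ q) u = q"
      using B.gmap_surj[OF good] by blast
    then show ?thesis using \<open>2 \<le> rkQ q\<close> by (auto simp: layer_def f_def)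
  qed
  have F4: "cv2 P leP rkP a b \<longleftrightarrow> cv2 Q leQ rkQ (f a) (f b)" if a: "a \<in> ?P2" and b: "b \<in> ?P2" for a b
  proof -
    have edge: "(b,a) \<in> hasse_edges P leP \<longleftrightarrow> (f b, f a) \<in> hasse_edges Q leQ" if r: "rkP b = Suc (rkP a)"
    proof -
      have g1: "B.goodP (rkP b)" using good b by simp
      have g2: "B.goodP (rkP b - 1)" using good a r by simp
      have bl: "b \<in> layer P rkP (rkP b)" and al: "a \<in> layer P rkP (rkP b - 1)" using a b r by (auto simp: layer_def)
      have "(b,a) \<in> hasse_edges P leP \<longleftrightarrow> (B.gmap (rkP b) b, B.gmap (rkP b - 1) a) \<in> hasse_edges Q leQ"
        by (rule B.edges[OF g1 g2 bl al])
      then show ?thesis using r by (simp add: f_def)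
    qed
    show ?thesis
    proof
      assume "cv2 P leP rkP a b"
      then have c: "covers P leP b a" by (simp add: cv2_def)
      then have r: "rkP b = Suc (rkP a)" using ranked_cover[OF P] by blast
      have "(f b, f a) \<in> hasse_edges Q leQ" using edge[OF r] c by (simp add: hasse_edges_def)
      then show "cv2 Q leQ rkQ (f a) (f b)" using F1'(2)[OF a] a by (simp add: cv2_def hasse_edges_def)
    next
      assume "cv2 Q leQ rkQ (f a) (f b)"
      then have c: "covers Q leQ (f b) (f a)" by (simp add: cv2_def)
      then have "rkQ (f b) = Suc (rkQ (f a))" using ranked_cover[OF Q] by blast
      then have r: "rkP b = Suc (rkP a)" using F1'(2)[OF a] F1'(2)[OF b] by simp
      have "(b, a) \<in> hasse_edges P leP" using edge[OF r] c by (simp add: hasse_edges_def)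
      then show "cv2 P leP rkP a b" using a by (simp add: cv2_def hasse_edges_def)
    qed
  qed
  have F6: "(cv2 P leP rkP)\<^sup>*\<^sup>* x y \<Longrightarrow> x \<in> ?P2 \<Longrightarrow> y \<in> ?P2 \<and> (cv2 Q leQ rkQ)\<^sup>*\<^sup>* (f x) (f y)" for x y
  proof (induction rule: rtranclp_induct)
    case base then show ?case by simp
  next
    case (step b c)
    have bP: "b \<in> ?P2" using step.IH step.prems by blast
    have cov: "covers P leP c b" using step.hyps(2) by (simp add: cv2_def)
    then have "c \<in> P" "rkP c = Suc (rkP b)" using ranked_cover[OF P] by (auto simp: covers_def)
    then have cP: "c \<in> ?P2" using bP by simp
    have "cv2 Q leQ rkQ (f b) (f c)" using F4[OF bP cP] step.hyps(2) by simp
    then show ?case using cP step.IH step.prems by (meson rtranclp.rtrancl_into_rtrancl)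
  qed
  have F7: "(cv2 Q leQ rkQ)\<^sup>*\<^sup>* (f x) w \<Longrightarrow> x \<in> ?P2 \<Longrightarrow> \<exists>y\<in>?P2. w = f y \<and> (cv2 P leP rkP)\<^sup>*\<^sup>* x y" for x w
  proof (induction rule: rtranclp_induct)
    case base then show ?case by blast
  next
    case (step z z')
    obtain y where y: "y \<in> ?P2" "z = f y" "(cv2 P leP rkP)\<^sup>*\<^sup>* x y" using step.IH step.prems by blast
    have cov: "covers Q leQ z' z" "2 \<le> rkQ z" using step.hyps(2) by (auto simp: cv2_def)
    then have "z' \<in> Q" "rkQ z' = Suc (rkQ z)" using ranked_cover[OF Q] by (auto simp: covers_def)
    then have "z' \<in> ?Q2" using cov(2) by simp
    then obtain y' where y': "y' \<in> ?P2" "f y' = z'" using F3 by blast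
    have "cv2 P leP rkP y y'" using F4[OF y(1) y'(1)] step.hyps(2) y(2) y'(2) by simp
    then have "(cv2 P leP rkP)\<^sup>*\<^sup>* x y'" using y(3) by (meson rtranclp.rtrancl_into_rtrancl)
    then show ?case using y' by blast
  qed
  have bij: "bij_betw f ?P2 ?Q2"
    unfolding bij_betw_def
  proof
    show "inj_on f ?P2" using F2 by (auto simp: inj_on_def)
    show "f ` ?P2 = ?Q2"
    proof
      show "f ` ?P2 \<subseteq> ?Q2" using F1' by auto
      show "?Q2 \<subseteq> f ` ?P2" using F3 by force
    qed
  qed
  have ord: "leP x y \<longleftrightarrow> leQ (f x) (f y)" if x: "x \<in> ?P2" and y: "y \<in> ?P2" for x y
  proof -
    have "leP x y \<longleftrightarrow> (cv2 P leP rkP)\<^sup>*\<^sup>* x y" using poset_rtc2[OF P] x y by simp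
    moreover have "leQ (f x) (f y) \<longleftrightarrow> (cv2 Q leQ rkQ)\<^sup>*\<^sup>* (f x) (f y)"
      using poset_rtc2[OF Q] F1'[OF x] F1'[OF y] x y by simp
    moreover have "(cv2 P leP rkP)\<^sup>*\<^sup>* x y \<longleftrightarrow> (cv2 Q leQ rkQ)\<^sup>*\<^sup>* (f x) (f y)"
    proof
      assume "(cv2 P leP rkP)\<^sup>*\<^sup>* x y"
      then show "(cv2 Q leQ rkQ)\<^sup>*\<^sup>* (f x) (f y)" using F6 x by blast
    next
      assume "(cv2 Q leQ rkQ)\<^sup>*\<^sup>* (f x) (f y)"
      then obtain y' where "y' \<in> ?P2" "f y = f y'" "(cv2 P leP rkP)\<^sup>*\<^sup>* x y'" using F7 x by blast
      then show "(cv2 P leP rkP)\<^sup>*\<^sup>* x y" using F2[OF y] by metis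
    qed
    ultimately show ?thesis by simp
  qed
  show ?thesis using bij ord F1'(2) by blast
qed



end
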